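(* Fix $o\in\mathbb{H}^3$ and let $\mathcal{M}$ be an almost semidefinite, closed, connected, two-dimensional submanifold of $\mathcal{L}$. (a) For every $\ell=[\gamma]\in\mathcal{M}$ ($\gamma$ unit speed), the restriction of $\psi_\gamma$ to $T_\gamma^{-1}(T_\ell\mathcal{M})$ is surjective onto $\dot\gamma(0)^\perp$. (b) Every critical point $\ell$ of $D|_{\mathcal{M}}$ satisfies $D(\ell)=0$ and is a strict local minimum of $D|_{\mathcal{M}}$. Moreover, $D(\ell_n)\to\infty$ for every sequence $(\ell_n)$ in $\mathcal{M}$ without cluster points (in $\mathcal{M}$).
   Context: $\mathbb{H}^3$ is the oriented three-dimensional hyperbolic space of curvature $-1$ with cross product $\times$. $\mathcal{L}$ is the smooth 4-manifold of complete oriented geodesics of $\mathbb{H}^3$. For a unit speed geodesic $\gamma$, $\mathcal{J}_\gamma$ is the space of Jacobi fields along $\gamma$ orthogonal to $\dot\gamma$ and $T_\gamma:\mathcal{J}_\gamma\to T_{[\gamma]}\mathcal{L}$, $T_\gamma(J)=\frac{d}{dt}\big|_0[\gamma_t]$ for a variation by unit speed geodesics with variation field $J$, is a linear isomorphism. The metrics $g_\times,g_K$ on $\mathcal{L}$ have square norms $\|T_\gamma(J)\|_\times=\langle\dot\gamma\times J,J'\rangle$, $\|T_\gamma(J)\|_K=|J|^2-|J'|^2$. A submanifold $\mathcal{M}\subset\mathcal{L}$ is almost semidefinite if $\|X\|_\times=0$ for $X\in T\mathcal{M}$ implies $\|X\|_K\ge0$. $\psi_\gamma:\mathcal{J}_\gamma\to\dot\gamma(0)^\perp$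 is $\psi_\gamma(J)=J(0)$. $D:\mathcal{L}\to\mathbb{R}$ assigns to an oriented geodesic the square of its distance to $o$ (a smooth function). *)

theory Defs
  imports "HOL-Analysis.Analysis"
begin

fun Ck_on :: "nat \<Rightarrow> 'a::euclidean_space set \<Rightarrow> ('a \<Rightarrow> 'b::euclidean_space) \<Rightarrow> bool" where
  "Ck_on 0 S f = continuous_on S f"
| "Ck_on (Suc k) S f = (\<exists>f'. (\<forall>x\<in>S. (f has_derivative f' x) (at x)) \<and>
                            (\<forall>v. Ck_on k S (\<lambda>x. f' x v)))"

definition smooth_on :: "'a::euclidean_space set \<Rightarrow> ('a \<Rightarrow> 'b::euclidean_space) \<Rightarrow> bool" where
  "smooth_on S f \<longleftrightarrow> (\<forall>k. Ck_on k S f)"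

section \<open>Hyperboloid model of H^3 in Minkowski space R^(1,3); coordinate 0 is time\<close>

definition mink :: "real^4 \<Rightarrow> real^4 \<Rightarrow> real" where
  "mink x y = (\<Sum>i\<in>UNIV. (if i = 0 then -1 else 1) * x$i * y$i)"

definition hyp :: "(real^4) set" where
  "hyp = {x. mink x x = -1 \<and> x$0 > 0}"

definition hdist :: "real^4 \<Rightarrow> real^4 \<Rightarrow> real" where
  "hdist x y = arcosh (- mink x y)"

definition unit_tangent :: "real^4 \<Rightarrow> real^4 \<Rightarrow> bool" where
  "unit_tangent p v \<longleftrightarrow> p \<in> hyp \<and> mink p v = 0 \<and> mink v v = 1"

definition geod :: "real^4 \<Rightarrow> real^4 \<Rightarrow> real \<Rightarrow> real^4" where
  "geod p v t = cosh t *\<^sub>R p + sinh t *\<^sub>R v"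

text \<open>Oriented geodesic identified with its (forward, backward) ideal endpoints,
  normalised null vectors with time coordinate 1.\<close>
definition endpoints :: "(real^4) \<times> (real^4) \<Rightarrow> (real^4) \<times> (real^4)" where
  "endpoints z = (inverse (fst z $ 0 + snd z $ 0) *\<^sub>R (fst z + snd z),
                  inverse (fst z $ 0 - snd z $ 0) *\<^sub>R (fst z - snd z))"

definition Lspace :: "((real^4) \<times> (real^4)) set" where
  "Lspace = endpoints ` {(p, v). unit_tangent p v}"

definition normal_vec :: "real^4 \<Rightarrow> real^4 \<Rightarrow> real^4 \<Rightarrow> bool" where
  "normal_vec p v w \<longleftrightarrow> mink w p = 0 \<and> mink w v = 0"

text \<open>A Jacobi field J orthogonal to the geodesic is represented by (A,B) = (J(0), J'(0)),
  A, B normal.  T_gamma(J) = derivative of [gamma_s] = derivative of the endpoint map.\<close>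
definition Tgeo :: "real^4 \<Rightarrow> real^4 \<Rightarrow> real^4 \<Rightarrow> real^4 \<Rightarrow> (real^4) \<times> (real^4)" where
  "Tgeo p v A B = frechet_derivative endpoints (at (p, v)) (A, B)"

definition rows4 :: "real^4 \<Rightarrow> real^4 \<Rightarrow> real^4 \<Rightarrow> real^4 \<Rightarrow> real^4^4" where
  "rows4 a b c d = (\<chi> i. if i = 0 then a else if i = 1 then b else if i = 2 then c else d)"

text \<open>Cross product on T_p H^3: mink (crossH p X Y) W = det(p,X,Y,W).\<close>
definition crossH :: "real^4 \<Rightarrow> real^4 \<Rightarrow> real^4 \<Rightarrow> real^4" where
  "crossH p X Y = (\<chi> i. (if i = 0 then -1 else 1) * det (rows4 p X Y (axis i 1)))"

text \<open>Square norms at t = 0: <gamma' x J, J'> and |J|^2 - |J'|^2.\<close>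
definition normX :: "real^4 \<Rightarrow> real^4 \<Rightarrow> real^4 \<Rightarrow> real^4 \<Rightarrow> real" where
  "normX p v A B = mink (crossH p v A) B"

definition normK :: "real^4 \<Rightarrow> real^4 \<Rightarrow> real^4 \<Rightarrow> real^4 \<Rightarrow> real" where
  "normK p v A B = mink A A - mink B B"

definition tangent_space :: "'a::real_normed_vector set \<Rightarrow> 'a \<Rightarrow> 'a set" where
  "tangent_space M x = {w. \<exists>c :: real \<Rightarrow> 'a. (\<forall>t. c t \<in> M) \<and> c 0 = x \<and>
                                  (c has_vector_derivative w) (at 0)}"

definition surface2 :: "'a::euclidean_space set \<Rightarrow> bool" where
  "surface2 M \<longleftrightarrow> (\<forall>x\<in>M. \<exists>U (V :: (real^2) set) \<phi> \<psi>. open U \<and> x \<in> U \<and> open V \<and>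
      smooth_on V \<phi> \<and> homeomorphism V (M \<inter> U) \<phi> \<psi> \<and>
      (\<forall>y\<in>V. \<exists>\<phi>'. (\<phi> has_derivative \<phi>') (at y) \<and> inj \<phi>'))"

definition almost_semidefinite :: "((real^4) \<times> (real^4)) set \<Rightarrow> bool" where
  "almost_semidefinite M \<longleftrightarrow> (\<forall>p v A B. unit_tangent p v \<and> endpoints (p, v) \<in> M \<and>
      normal_vec p v A \<and> normal_vec p v B \<and>
      Tgeo p v A B \<in> tangent_space M (endpoints (p, v)) \<and> normX p v A B = 0
      \<longrightarrow> normK p v A B \<ge> 0)"

definition Dfun :: "real^4 \<Rightarrow> (real^4) \<times> (real^4) \<Rightarrow> real" where
  "Dfun o' l = (INF z \<in> {(p, v, t). unit_tangent p v \<and> endpoints (p, v) = l}.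
                   hdist o' (geod (fst z) (fst (snd z)) (snd (snd z)))) ^ 2"

definition critical_on :: "'a::real_normed_vector set \<Rightarrow> ('a \<Rightarrow> real) \<Rightarrow> 'a \<Rightarrow> bool" where
  "critical_on M f x \<longleftrightarrow> x \<in> M \<and> (\<forall>c w. (\<forall>t. c t \<in> M) \<and> c 0 = x \<and>
      (c has_vector_derivative w) (at 0) \<longrightarrow> ((f \<circ> c) has_real_derivative 0) (at 0))"

end

theory Submission
  imports Defs
begin


lemma z4: "(0::4) = 4" by simp

lemma mink_exp: "mink x y = - x$0*y$0 + x$1*y$1 + x$2*y$2 + x$3*y$3"
  unfolding mink_def sum_4 by (simp add: z4[symmetric])

lemma vec4_eq: "(x::real^4) = y \<longleftrightarrow> x$0 = y$0 \<and> x$1 = y$1 \<and> x$2 = y$2 \<and> x$3 = y$3"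
  unfolding vec_eq_iff forall_4 z4[symmetric] by auto

lemma mink_sym: "mink x y = mink y x" by (simp add: mink_exp algebra_simps)
lemma mink_add_left: "mink (x + y) z = mink x z + mink y z" by (simp add: mink_exp algebra_simps)
lemma mink_add_right: "mink z (x + y) = mink z x + mink z y" by (simp add: mink_exp algebra_simps)
lemma mink_diff_left: "mink (x - y) z = mink x z - mink y z" by (simp add: mink_exp algebra_simps)
lemma mink_diff_right: "mink z (x - y) = mink z x - mink z y" by (simp add: mink_exp algebra_simps)
lemma mink_scale_left: "mink (c *\<^sub>R x) z = c * mink x z" by (simp add: mink_exp algebra_simps)
lemma mink_scale_right: "mink z (c *\<^sub>R x) = c * mink z x" by (simp add: mink_exp algebra_simps)
lemma mink_minus_left: "mink (- x) z = - mink x z" by (simp add: mink_exp algebra_simps)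
lemma mink_minus_right: "mink z (- x) = - mink z x" by (simp add: mink_exp algebra_simps)
lemma mink_zero[simp]: "mink 0 z = 0" "mink z 0 = 0" by (simp_all add: mink_exp)

lemmas mink_simps = mink_add_left mink_add_right mink_diff_left mink_diff_right
  mink_scale_left mink_scale_right mink_minus_left mink_minus_right

lemma bb_mink: "bounded_bilinear mink"
proof (rule bounded_bilinear.intro)
  show "\<exists>K. \<forall>x y. norm (mink x y) \<le> norm x * norm y * K"
  proof (intro exI allI)
    fix x y :: "real^4"
    have "\<bar>x$i\<bar> \<le> norm x" "\<bar>y$i\<bar> \<le> norm y" for i
      by (simp_all add: component_le_norm_cart)
    hence b: "\<bar>x$i * y$i\<bar> \<le> norm x * norm y" for i
      by (simp add: abs_mult mult_mono')
    have "norm (mink x y) \<le> \<bar>x$0*y$0\<bar> + \<bar>x$1*y$1\<bar> + \<bar>x$2*y$2\<bar> + \<bar>x$3*y$3\<bar>"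
      by (simp add: mink_exp)
    also have "\<dots> \<le> norm x * norm y * 4" using b[of 0] b[of 1] b[of 2] b[of 3] by linarith
    finally show "norm (mink x y) \<le> norm x * norm y * 4" .
  qed
qed (simp_all add: mink_simps)

lemmas mink_deriv[derivative_intros] = bounded_bilinear.FDERIV[OF bb_mink]

lemma nth_deriv[derivative_intros]:
  "(f has_derivative f') F \<Longrightarrow> ((\<lambda>x. f x $ i) has_derivative (\<lambda>h. f' h $ i)) F"
  using bounded_linear.has_derivative[OF bounded_linear_vec_nth] .

lemma cs3: "(a1*b1+a2*b2+a3*b3)^2 \<le> (a1^2+a2^2+(a3::real)^2)*(b1^2+b2^2+b3^2)"
proof -
  have "(a1^2+a2^2+a3^2)*(b1^2+b2^2+b3^2) - (a1*b1+a2*b2+a3*b3)^2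
        = (a1*b2-a2*b1)^2+(a1*b3-a3*b1)^2+(a2*b3-a3*b2)^2"
    by (simp add: power2_eq_square algebra_simps)
  moreover have "(a1*b2-a2*b1)^2+(a1*b3-a3*b1)^2+(a2*b3-a3*b2)^2 \<ge> 0" by simp
  ultimately show ?thesis by linarith
qed

lemma sq3_zero: "a^2+b^2+c^2 = (0::real) \<Longrightarrow> a = 0 \<and> b = 0 \<and> c = 0"
  using zero_le_power2[of a] zero_le_power2[of b] zero_le_power2[of c]
  by (smt (verit) power2_eq_square zero_eq_power2)

lemma spacelike:
  assumes q: "mink q q < 0" and w: "mink w q = 0"
  shows "mink w w \<ge> 0" and "mink w w = 0 \<Longrightarrow> w = 0"
proof -
  define sq where "sq = q$1^2+q$2^2+q$3^2"
  define sw where "sw = w$1^2+w$2^2+w$3^2"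
  have q': "sq < q$0^2" using q by (simp add: mink_exp sq_def power2_eq_square)
  have e: "w$0*q$0 = w$1*q$1+w$2*q$2+w$3*q$3" using w by (simp add: mink_exp)
  have c: "(w$0*q$0)^2 \<le> sw * sq" unfolding e sw_def sq_def by (rule cs3)
  have sq0: "sq \<ge> 0" "sw \<ge> 0" by (simp_all add: sq_def sw_def)
  have "w$0^2 \<le> sw \<and> (w$0^2 = sw \<longrightarrow> w = 0)"
  proof (cases "sw = 0")
    case True
    hence "w$1 = 0" "w$2 = 0" "w$3 = 0" using sq3_zero unfolding sw_def by blast+
    moreover have "w$0 = 0" using c True q' sq0
      by (smt (verit, ccfv_SIG) mult_eq_0_iff power2_eq_square power_mult_distrib zero_le_power2 mult_zero_left)
    ultimately show ?thesis using True by (simp add: vec4_eq)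
  next
    case False
    hence "sw > 0" using sq0 by simp
    hence "sw * sq < sw * q$0^2" using q' by simp
    hence "w$0^2 * q$0^2 < sw * q$0^2" using c by (simp add: power_mult_distrib)
    hence "w$0^2 < sw" by (simp add: mult_less_cancel_right)
    thus ?thesis by simp
  qed
  thus "mink w w \<ge> 0" and "mink w w = 0 \<Longrightarrow> w = 0"
    by (auto simp: mink_exp sw_def power2_eq_square)
qed

lemma hyp_timelike: "p \<in> hyp \<Longrightarrow> mink p p < 0" by (simp add: hyp_def)

lemma mink_neg:
  assumes o: "oq \<in> hyp" and x0: "x$0 > 0" and xx: "mink x x \<le> 0"
  shows "mink oq x < 0"
proof -
  define so where "so = oq$1^2+ oq$2^2+ oq$3^2"
  define sx where "sx = x$1^2+x$2^2+x$3^2"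
  have so1: "so = oq$0^2 - 1" and "oq$0 > 0" using o by (auto simp: hyp_def mink_exp so_def power2_eq_square)
  have sx: "sx \<le> x$0^2" using xx by (simp add: mink_exp sx_def power2_eq_square)
  have c: "(oq$1*x$1+ oq$2*x$2+ oq$3*x$3)^2 \<le> so * sx" unfolding so_def sx_def by (rule cs3)
  have "so * sx < oq$0^2 * x$0^2"
  proof -
    have "so * sx \<le> so * x$0^2" using sx by (simp add: mult_left_mono so_def)
    also have "\<dots> < oq$0^2 * x$0^2" using so1 x0 by simp
    finally show ?thesis .
  qed
  hence "(oq$1*x$1+ oq$2*x$2+ oq$3*x$3)^2 < (oq$0 * x$0)^2" using c by (simp add: power_mult_distrib)
  hence "\<bar>oq$1*x$1+ oq$2*x$2+ oq$3*x$3\<bar> < \<bar>oq$0 * x$0\<bar>" 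
    using power2_less_imp_less[of "\<bar>oq$1*x$1+ oq$2*x$2+ oq$3*x$3\<bar>" "\<bar>oq$0 * x$0\<bar>"] by simp
  thus ?thesis using \<open>oq$0 > 0\<close> x0 by (simp add: mink_exp)
qed




lemma ut_time:
  assumes "unit_tangent p v"
  shows "p$0 > 0" "1 + v$0^2 \<le> p$0^2" "p$0 + v$0 > 0" "p$0 - v$0 > 0"
proof -
  have h: "mink p p = -1" "p$0 > 0" "mink p v = 0" "mink v v = 1"
    using assms by (auto simp: unit_tangent_def hyp_def)
  define sp where "sp = p$1^2+p$2^2+p$3^2"
  define sv where "sv = v$1^2+v$2^2+v$3^2"
  have 1: "sp = p$0^2 - 1" using h(1) by (simp add: mink_exp sp_def power2_eq_square)
  have 2: "sv = 1 + v$0^2" using h(4) by (simp add: mink_exp sv_def power2_eq_square)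
  have e: "p$0 * v$0 = p$1 * v$1+p$2 * v$2+p$3 * v$3" using h(3) by (simp add: mink_exp)
  have c: "(p$0 * v$0)^2 \<le> sp * sv" unfolding e sp_def sv_def by (rule cs3)
  hence "p$0^2 * v$0^2 \<le> (p$0^2 - 1) * (1 + v$0^2)" unfolding 1 2 by (simp add: power_mult_distrib)
  thus 3: "1 + v$0^2 \<le> p$0^2" by (simp add: algebra_simps)
  show "p$0 > 0" by fact
  have "v$0^2 < p$0^2" using 3 by simp
  hence "\<bar>v$0\<bar> < p$0" using power2_less_imp_less[of "\<bar>v$0\<bar>" "p$0"] h(2) by simp
  thus "p$0 + v$0 > 0" "p$0 - v$0 > 0" by linarith+
qed

definition Lchar :: "((real^4) \<times> (real^4)) set" where
  "Lchar = {(x,y). mink x x = 0 \<and> mink y y = 0 \<and> x$0 = 1 \<and> y$0 = 1 \<and> mink x y < 0}"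

definition sig :: "(real^4) \<times> (real^4) \<Rightarrow> (real^4) \<times> (real^4)" where
  "sig z = (inverse (sqrt (-2 * mink (fst z) (snd z))) *\<^sub>R (fst z + snd z),
            inverse (sqrt (-2 * mink (fst z) (snd z))) *\<^sub>R (fst z - snd z))"

lemma ut_facts: "unit_tangent p v \<Longrightarrow> mink p p = -1 \<and> mink p v = 0 \<and> mink v p = 0 \<and> mink v v = 1 \<and> p \<in> hyp"
  by (auto simp: unit_tangent_def hyp_def mink_sym)

lemma E_Lchar:
  assumes "unit_tangent p v"
  shows "endpoints (p, v) \<in> Lchar"
    "mink (fst (endpoints (p,v))) (snd (endpoints (p,v))) = -2 / ((p$0+v$0)*(p$0-v$0))"
proof -
  note t = ut_time[OF assms] and f = ut_facts[OF assms]
  have m: "mink (p+v) (p+v) = 0" "mink (p-v) (p-v) = 0" "mink (p+v) (p-v) = -2"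
    using f by (simp_all add: mink_simps)
  have my: "mink (fst (endpoints (p,v))) (snd (endpoints (p,v))) = -2 / ((p$0+v$0)*(p$0-v$0))"
    unfolding endpoints_def using m t f by (simp add: mink_simps field_simps)
  thus "mink (fst (endpoints (p,v))) (snd (endpoints (p,v))) = -2 / ((p$0+v$0)*(p$0-v$0))" .
  have "-2 / ((p$0+v$0)*(p$0-v$0)) < 0" using t by (simp add: divide_neg_pos)
  thus "endpoints (p, v) \<in> Lchar"
    using m t my f unfolding Lchar_def endpoints_def by (simp add: mink_simps)
qed

lemma Lchar_sig:
  assumes "z \<in> Lchar"
  shows "unit_tangent (fst (sig z)) (snd (sig z))" "endpoints (sig z) = z"
proof -
  obtain x y where z: "z = (x,y)" by force
  have h: "mink x x = 0" "mink y y = 0" "x$0 = 1" "y$0 = 1" "mink x y < 0"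
    using assms z by (auto simp: Lchar_def)
  define s where "s = sqrt (-2 * mink x y)"
  have s: "s > 0" "s^2 = -2 * mink x y" using h(5) by (auto simp: s_def)
  have sg: "sig z = (inverse s *\<^sub>R (x+y), inverse s *\<^sub>R (x-y))" by (simp add: sig_def z s_def)
  have "mink (inverse s *\<^sub>R (x+y)) (inverse s *\<^sub>R (x+y)) = 2 * mink x y / s^2"
    using h by (simp add: mink_simps mink_sym[of y x] power2_eq_square field_simps)
  hence a: "mink (inverse s *\<^sub>R (x+y)) (inverse s *\<^sub>R (x+y)) = -1" using s h(5) by simp
  have "mink (inverse s *\<^sub>R (x-y)) (inverse s *\<^sub>R (x-y)) = -2 * mink x y / s^2"
    using h by (simp add: mink_simps mink_sym[of y x] power2_eq_square field_simps)
  hence b: "mink (inverse s *\<^sub>R (x-y)) (inverse s *\<^sub>R (x-y)) = 1" using s h(5) by simp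
  have c: "mink (inverse s *\<^sub>R (x+y)) (inverse s *\<^sub>R (x-y)) = 0"
    using h by (simp add: mink_simps mink_sym[of y x])
  have d: "(inverse s *\<^sub>R (x+y))$0 > 0" using h s by simp
  show "unit_tangent (fst (sig z)) (snd (sig z))"
    unfolding sg unit_tangent_def hyp_def using a b c d by simp
  have e1: "inverse ((inverse s *\<^sub>R (x+y))$0 + (inverse s *\<^sub>R (x-y))$0) *\<^sub>R
             (inverse s *\<^sub>R (x+y) + inverse s *\<^sub>R (x-y)) = x"
    using h s by (simp add: algebra_simps scaleR_2[symmetric] del: scaleR_2)
  have e2a: "inverse s *\<^sub>R (x+y) - inverse s *\<^sub>R (x-y) = (2 / s) *\<^sub>R y"
    by (simp add: vec_eq_iff field_simps)
  have e2b: "(inverse s *\<^sub>R (x+y))$0 - (inverse s *\<^sub>R (x-y))$0 = 2 / s"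
    using h by (simp add: field_simps)
  have e2: "inverse ((inverse s *\<^sub>R (x+y))$0 - (inverse s *\<^sub>R (x-y))$0) *\<^sub>R
             (inverse s *\<^sub>R (x+y) - inverse s *\<^sub>R (x-y)) = y"
    unfolding e2a e2b using s by simp
  show "endpoints (sig z) = z" unfolding sg endpoints_def using e1 e2 z by simp
qed

lemma Lspace_eq: "Lspace = Lchar"
proof
  show "Lspace \<subseteq> Lchar" unfolding Lspace_def using E_Lchar by auto
  show "Lchar \<subseteq> Lspace"
  proof
    fix z assume "z \<in> Lchar"
    from Lchar_sig[OF this] show "z \<in> Lspace" unfolding Lspace_def
      by (metis (mono_tags, lifting) case_prodI image_eqI mem_Collect_eq prod.collapse)
  qed
qed




definition Rf :: "real \<Rightarrow> (real^4) \<times> (real^4) \<Rightarrow> (real^4) \<times> (real^4)" where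
  "Rf t z = (cosh t *\<^sub>R fst z + sinh t *\<^sub>R snd z, sinh t *\<^sub>R fst z + cosh t *\<^sub>R snd z)"

lemma sinh_lt_cosh: "\<bar>sinh (t::real)\<bar> < cosh t"
proof -
  have "sinh t ^ 2 < cosh t ^ 2" using cosh_square_eq[of t] by simp
  thus ?thesis using power2_less_imp_less[of "\<bar>sinh t\<bar>" "cosh t"] by simp
qed

lemma E_R: "endpoints (Rf t z) = endpoints z"
proof -
  obtain x y where z: "z = (x,y)" by force
  have h1: "cosh t *\<^sub>R x + sinh t *\<^sub>R y + (sinh t *\<^sub>R x + cosh t *\<^sub>R y) = exp t *\<^sub>R (x + y)"
    by (simp add: cosh_plus_sinh[symmetric] algebra_simps)
  have h2: "cosh t *\<^sub>R x + sinh t *\<^sub>R y - (sinh t *\<^sub>R x + cosh t *\<^sub>R y) = exp (-t) *\<^sub>R (x - y)"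
    by (simp add: cosh_minus_sinh[symmetric] algebra_simps)
  have h3: "(cosh t *\<^sub>R x + sinh t *\<^sub>R y)$0 + (sinh t *\<^sub>R x + cosh t *\<^sub>R y)$0 = exp t * (x$0 + y$0)"
    using arg_cong[OF h1, of "\<lambda>w. w$0"] by simp
  have h4: "(cosh t *\<^sub>R x + sinh t *\<^sub>R y)$0 - (sinh t *\<^sub>R x + cosh t *\<^sub>R y)$0 = exp (-t) * (x$0 - y$0)"
    using arg_cong[OF h2, of "\<lambda>w. w$0"] by simp
  show ?thesis unfolding z Rf_def endpoints_def fst_conv snd_conv h1 h2 h3 h4
    by simp
qed

lemma UT_R:
  assumes "unit_tangent p v"
  shows "unit_tangent (fst (Rf t (p,v))) (snd (Rf t (p,v)))"
proof -
  note f = ut_facts[OF assms] and tm = ut_time[OF assms]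
  have cs: "cosh t ^ 2 - sinh t ^ 2 = 1" using cosh_square_eq[of t] by simp
  have a: "mink (cosh t *\<^sub>R p + sinh t *\<^sub>R v) (cosh t *\<^sub>R p + sinh t *\<^sub>R v) = -1"
    using f cs by (simp add: mink_simps power2_eq_square algebra_simps)
  have b: "mink (sinh t *\<^sub>R p + cosh t *\<^sub>R v) (sinh t *\<^sub>R p + cosh t *\<^sub>R v) = 1"
    using f cs by (simp add: mink_simps power2_eq_square algebra_simps)
  have c: "mink (cosh t *\<^sub>R p + sinh t *\<^sub>R v) (sinh t *\<^sub>R p + cosh t *\<^sub>R v) = 0"
    using f by (simp add: mink_simps power2_eq_square algebra_simps)
  have "\<bar>v$0\<bar> < p$0" using tm by linarith
  hence "\<bar>sinh t\<bar> * \<bar>v$0\<bar> < cosh t * p$0"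
    using sinh_lt_cosh[of t] by (intro mult_strict_mono') auto
  moreover have "- (\<bar>sinh t\<bar> * \<bar>v$0\<bar>) \<le> sinh t * v$0"
    using abs_ge_minus_self[of "sinh t * v$0"] abs_mult[of "sinh t" "v$0"] by linarith
  ultimately have d: "(cosh t *\<^sub>R p + sinh t *\<^sub>R v)$0 > 0" by simp
  show ?thesis unfolding Rf_def unit_tangent_def hyp_def using a b c d by simp
qed

lemma rep_R:
  assumes u: "unit_tangent p v" and u1: "unit_tangent p1 v1"
    and e: "endpoints (p,v) = endpoints (p1,v1)"
  shows "\<exists>t. (p,v) = Rf t (p1,v1)"
proof -
  note t = ut_time[OF u] and t1 = ut_time[OF u1] and f = ut_facts[OF u] and f1 = ut_facts[OF u1]
  define l where "l = (p$0+v$0)/(p1$0+v1$0)"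
  define m where "m = (p$0-v$0)/(p1$0-v1$0)"
  have l: "l > 0" "m > 0" using t t1 by (simp_all add: l_def m_def)
  have e1: "inverse (p$0+v$0) *\<^sub>R (p+v) = inverse (p1$0+v1$0) *\<^sub>R (p1+v1)"
    using e by (simp add: endpoints_def)
  have e2: "inverse (p$0-v$0) *\<^sub>R (p-v) = inverse (p1$0-v1$0) *\<^sub>R (p1-v1)"
    using e by (simp add: endpoints_def)
  have pv1: "p + v = l *\<^sub>R (p1 + v1)"
  proof -
    have "p + v = (p$0+v$0) *\<^sub>R (inverse (p$0+v$0) *\<^sub>R (p+v))" using t by simp
    also have "\<dots> = l *\<^sub>R (p1 + v1)" unfolding e1 l_def by (simp add: divide_inverse)
    finally show ?thesis .
  qed
  have pv2: "p - v = m *\<^sub>R (p1 - v1)"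
  proof -
    have "p - v = (p$0-v$0) *\<^sub>R (inverse (p$0-v$0) *\<^sub>R (p-v))" using t by simp
    also have "\<dots> = m *\<^sub>R (p1 - v1)" unfolding e2 m_def by (simp add: divide_inverse)
    finally show ?thesis .
  qed
  have "mink (p+v) (p-v) = -2" using f by (simp add: mink_simps)
  moreover have "mink (l *\<^sub>R (p1 + v1)) (m *\<^sub>R (p1 - v1)) = -2 * l * m" using f1 by (simp add: mink_simps)
  ultimately have lm: "l * m = 1" unfolding pv1 pv2 by simp
  hence mi: "m = inverse l" using l by (simp add: field_simps)
  define tt where "tt = ln l"
  have ch: "cosh tt = (l + m)/2" "sinh tt = (l - m)/2"
    unfolding tt_def mi using l by (simp_all add: cosh_ln_real sinh_ln_real)
  have "p = (1/2) *\<^sub>R ((p + v) + (p - v))" by (simp add: algebra_simps scaleR_2[symmetric] del: scaleR_2)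
  also have "\<dots> = cosh tt *\<^sub>R p1 + sinh tt *\<^sub>R v1" unfolding pv1 pv2 ch
    by (simp add: vec_eq_iff field_simps)
  finally have P: "p = cosh tt *\<^sub>R p1 + sinh tt *\<^sub>R v1" .
  have "v = (1/2) *\<^sub>R ((p + v) - (p - v))" by (simp add: algebra_simps scaleR_2[symmetric] del: scaleR_2)
  also have "\<dots> = sinh tt *\<^sub>R p1 + cosh tt *\<^sub>R v1" unfolding pv1 pv2 ch
    by (simp add: vec_eq_iff field_simps)
  finally have V: "v = sinh tt *\<^sub>R p1 + cosh tt *\<^sub>R v1" .
  show ?thesis using P V by (auto simp: Rf_def)
qed

lemma decomp:
  assumes u: "unit_tangent p v" and o: "oq \<in> hyp"
  defines "N \<equiv> oq + mink oq p *\<^sub>R p - mink oq v *\<^sub>R v"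
  shows "normal_vec p v N" "mink oq p ^ 2 - mink oq v ^ 2 = 1 + mink N N"
    "mink N N \<ge> 0" "mink oq p < 0"
proof -
  note f = ut_facts[OF u]
  have oo: "mink oq oq = -1" using o by (simp add: hyp_def)
  show n: "normal_vec p v N" unfolding normal_vec_def N_def using f
    by (simp add: mink_simps mink_sym[of p oq] mink_sym[of v oq])
  show "mink oq p ^ 2 - mink oq v ^ 2 = 1 + mink N N" unfolding N_def using f oo
    by (simp add: mink_simps mink_sym[of p oq] mink_sym[of v oq] power2_eq_square algebra_simps)
  show "mink N N \<ge> 0" using spacelike(1)[of p N] n f by (simp add: normal_vec_def)
  show "mink oq p < 0" using mink_neg[OF o, of p] ut_time[OF u] f by simp
qed

lemma foot_rep:
  assumes l: "l \<in> Lspace" and o: "oq \<in> hyp"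
  shows "\<exists>p v. unit_tangent p v \<and> endpoints (p,v) = l \<and> mink oq v = 0"
proof -
  have lc: "l \<in> Lchar" using l Lspace_eq by simp
  define p1 where "p1 = fst (sig l)"
  define v1 where "v1 = snd (sig l)"
  have u1: "unit_tangent p1 v1" and e1: "endpoints (p1,v1) = l"
    using Lchar_sig[OF lc] by (simp_all add: p1_def v1_def)
  define a where "a = - mink oq p1"
  define b where "b = - mink oq v1"
  note d = decomp[OF u1 o]
  have a0: "a > 0" using d(4) by (simp add: a_def)
  have "a^2 - b^2 \<ge> 1" using d(2,3) by (simp add: a_def b_def)
  hence "b^2 < a^2" by simp
  hence ab: "\<bar>b\<bar> < a" using power2_less_imp_less[of "\<bar>b\<bar>" a] a0 by simp
  define e where "e = sqrt ((a-b)/(a+b))"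
  have e0: "e > 0" using ab by (simp add: e_def)
  have e2: "e^2 = (a-b)/(a+b)" using ab by (simp add: e_def)
  define t where "t = ln e"
  have ch: "cosh t = (e + inverse e)/2" "sinh t = (e - inverse e)/2"
    unfolding t_def using e0 by (simp_all add: cosh_ln_real sinh_ln_real)
  have key: "sinh t * a + cosh t * b = 0"
  proof -
    have "(a+b) * e^2 = a - b" using e2 ab by (simp add: field_simps)
    hence "(a+b) * e * e - (a - b) = 0" by (simp add: power2_eq_square)
    hence "((a+b) * e * e - (a - b)) / (2*e) = 0" by simp
    moreover have "sinh t * a + cosh t * b = ((a+b) * e * e - (a - b)) / (2*e)"
      unfolding ch using e0 by (simp add: field_simps)
    ultimately show ?thesis by simp
  qed
  define p where "p = fst (Rf t (p1,v1))"
  define v where "v = snd (Rf t (p1,v1))"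
  have "unit_tangent p v" using UT_R[OF u1] by (simp add: p_def v_def)
  moreover have "endpoints (p,v) = l" using E_R[of t "(p1,v1)"] e1 by (simp add: p_def v_def)
  moreover have "mink oq v = 0" using key
    by (simp add: v_def Rf_def mink_simps a_def b_def algebra_simps)
  ultimately show ?thesis by blast
qed




definition dE :: "(real^4) \<times> (real^4) \<Rightarrow> (real^4) \<times> (real^4) \<Rightarrow> (real^4) \<times> (real^4)" where
  "dE z = frechet_derivative endpoints (at z)"

lemma E_hasderiv:
  assumes "fst z$0 + snd z$0 \<noteq> 0" "fst z$0 - snd z$0 \<noteq> 0"
  shows "(endpoints has_derivative dE z) (at z)"
proof -
  have "endpoints differentiable (at z)"
    unfolding differentiable_def endpoints_def[abs_def]
    apply (rule exI)
    using assms apply -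
    apply (rule derivative_intros | simp)+
    done
  thus ?thesis unfolding dE_def frechet_derivative_works .
qed

lemma ut_Ediff: "unit_tangent p v \<Longrightarrow> (endpoints has_derivative dE (p,v)) (at (p,v))"
  by (rule E_hasderiv) (use ut_time[of p v] in auto)

lemma ut_dE_linear: "unit_tangent p v \<Longrightarrow> linear (dE (p,v))"
  using ut_Ediff has_derivative_bounded_linear bounded_linear.linear by blast

lemma Tgeo_dE: "Tgeo p v A B = dE (p,v) (A,B)" by (simp add: Tgeo_def dE_def)

definition dS :: "(real^4) \<times> (real^4) \<Rightarrow> (real^4) \<times> (real^4) \<Rightarrow> (real^4) \<times> (real^4)" where
  "dS z = frechet_derivative sig (at z)"

lemma sig_hasderiv:
  assumes "mink (fst z) (snd z) < 0"
  shows "(sig has_derivative dS z) (at z)"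
proof -
  have "sig differentiable (at z)"
    unfolding differentiable_def sig_def[abs_def]
    apply (rule exI)
    using assms apply -
    apply (rule derivative_intros | simp)+
    done
  thus ?thesis unfolding dS_def frechet_derivative_works .
qed

lemma deriv_const_zero:
  assumes "(f has_derivative f') (at x)" "\<And>t. f t = k"
  shows "f' y = 0"
proof -
  have "f = (\<lambda>t. k)" using assms(2) by auto
  hence "(f has_derivative (\<lambda>h. 0)) (at x)" by simp
  hence "f' = (\<lambda>h. 0)" using has_derivative_unique assms(1) by blast
  thus ?thesis by simp
qed

lemma Rf_deriv: "(Rf t has_derivative Rf t) (at z)"
  unfolding Rf_def[abs_def]
  by (rule derivative_eq_intros refl)+

lemma dE_R:
  assumes "fst z$0 + snd z$0 \<noteq> 0" "fst z$0 - snd z$0 \<noteq> 0"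
  shows "dE (Rf t z) (Rf t h) = dE z h"
proof -
  obtain x y where z: "z = (x,y)" by force
  have c1: "fst (Rf t z)$0 + snd (Rf t z)$0 = exp t * (fst z$0 + snd z$0)"
    by (simp add: Rf_def cosh_plus_sinh[symmetric] algebra_simps)
  have c2: "fst (Rf t z)$0 - snd (Rf t z)$0 = exp (-t) * (fst z$0 - snd z$0)"
    by (simp add: Rf_def cosh_minus_sinh[symmetric] algebra_simps)
  have 1: "(endpoints has_derivative dE (Rf t z)) (at (Rf t z))"
    by (rule E_hasderiv) (use assms c1 c2 in auto)
  have 2: "((\<lambda>x. endpoints (Rf t x)) has_derivative (\<lambda>h. dE (Rf t z) (Rf t h))) (at z)"
    by (rule has_derivative_compose[OF Rf_deriv 1])
  have "(\<lambda>x. endpoints (Rf t x)) = endpoints" by (rule ext, rule E_R)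
  hence "(endpoints has_derivative (\<lambda>h. dE (Rf t z) (Rf t h))) (at z)" using 2 by simp
  moreover have "(endpoints has_derivative dE z) (at z)" by (rule E_hasderiv[OF assms])
  ultimately have "(\<lambda>h. dE (Rf t z) (Rf t h)) = dE z" using has_derivative_unique by blast
  thus ?thesis by metis
qed

lemma dE_flow:
  assumes u: "unit_tangent p v"
  shows "dE (p,v) (v,p) = 0"
proof -
  define g where "g = (\<lambda>t. Rf t (p,v))"
  have i: "((\<lambda>t::real. t) has_derivative (\<lambda>y. 1 * y)) (at 0)" by simp
  note ch = has_derivative_cosh[OF i] and sh = has_derivative_sinh[OF i]
  have "(g has_derivative (\<lambda>h. ((sinh 0 * 1 * h) *\<^sub>R p + (cosh 0 * 1 * h) *\<^sub>R v,
                                  (cosh 0 * 1 * h) *\<^sub>R p + (sinh 0 * 1 * h) *\<^sub>R v))) (at 0)"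
    unfolding g_def Rf_def fst_conv snd_conv
    by (intro has_derivative_Pair has_derivative_add has_derivative_scaleR_left ch sh)
  moreover have "(\<lambda>h. ((sinh 0 * 1 * h) *\<^sub>R p + (cosh 0 * 1 * h) *\<^sub>R v,
                                  (cosh 0 * 1 * h) *\<^sub>R p + (sinh 0 * 1 * h) *\<^sub>R v)) = (\<lambda>h. h *\<^sub>R (v,p))"
    by (simp add: fun_eq_iff)
  ultimately have g: "(g has_derivative (\<lambda>h. h *\<^sub>R (v,p))) (at 0)" by simp
  have g0: "g 0 = (p,v)" by (simp add: g_def Rf_def)
  have "((\<lambda>t. endpoints (g t)) has_derivative (\<lambda>h. dE (p,v) (h *\<^sub>R (v,p)))) (at 0)"
    using has_derivative_compose[OF g, of endpoints "dE (p,v)"] ut_Ediff[OF u] g0 by simp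
  moreover have "\<And>t. endpoints (g t) = endpoints (p,v)" by (simp add: g_def E_R)
  ultimately have "dE (p,v) (1 *\<^sub>R (v,p)) = 0" by (rule deriv_const_zero)
  thus ?thesis by simp
qed




lemma Lchar_mink: "l \<in> Lchar \<Longrightarrow> mink (fst l) (snd l) < 0"
  unfolding Lchar_def by (cases l) auto

lemma tangent_lift:
  assumes u: "unit_tangent p v" and cL: "\<forall>t. c t \<in> Lspace" and c0: "c 0 = endpoints (p,v)"
    and cd: "(c has_vector_derivative w) (at 0)"
  shows "\<exists>A B. normal_vec p v A \<and> normal_vec p v B \<and> w = dE (p,v) (A,B)"
proof -
  define l where "l = endpoints (p,v)"
  have lc: "l \<in> Lchar" using E_Lchar(1)[OF u] l_def by simp
  have ml: "mink (fst l) (snd l) < 0" using Lchar_mink[OF lc] .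
  define p1 where "p1 = fst (sig l)"
  define v1 where "v1 = snd (sig l)"
  have u1: "unit_tangent p1 v1" and e1: "endpoints (p1,v1) = l"
    using Lchar_sig[OF lc] by (simp_all add: p1_def v1_def)
  note f1 = ut_facts[OF u1]
  have S: "(sig has_derivative dS l) (at l)" by (rule sig_hasderiv[OF ml])
  have lin: "linear (dS l)" using S has_derivative_bounded_linear bounded_linear.linear by blast
  have cD: "(c has_derivative (\<lambda>h. h *\<^sub>R w)) (at 0)" using cd by (simp add: has_vector_derivative_def)
  define G where "G = (\<lambda>t. sig (c t))"
  have GD: "(G has_derivative (\<lambda>h. dS l (h *\<^sub>R w))) (at 0)"
    unfolding G_def using has_derivative_compose[OF cD, of sig "dS l"] S c0 l_def by simp
  define A1 where "A1 = fst (dS l w)"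
  define B1 where "B1 = snd (dS l w)"
  have "(\<lambda>h. dS l (h *\<^sub>R w)) = (\<lambda>h. h *\<^sub>R (A1,B1))"
    using linear_cmul[OF lin] by (simp add: A1_def B1_def fun_eq_iff)
  hence GD': "(G has_derivative (\<lambda>h. h *\<^sub>R (A1,B1))) (at 0)" using GD by simp
  have G0: "G 0 = (p1,v1)" by (simp add: G_def c0 l_def[symmetric] p1_def v1_def)
  have ctc: "c t \<in> Lchar" for t using cL Lspace_eq by auto
  have Gut: "unit_tangent (fst (G t)) (snd (G t))" for t using Lchar_sig(1)[OF ctc] by (simp add: G_def)
  have EG: "endpoints (G t) = c t" for t using Lchar_sig(2)[OF ctc] by (simp add: G_def)
  note Gf = has_derivative_fst[OF GD'] and Gs = has_derivative_snd[OF GD']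
  have d1: "mink p1 A1 + mink A1 p1 = 0"
    using deriv_const_zero[OF mink_deriv[OF Gf Gf], of "-1" 1] Gut[unfolded unit_tangent_def hyp_def] G0 by simp
  have d2: "mink p1 B1 + mink A1 v1 = 0"
    using deriv_const_zero[OF mink_deriv[OF Gf Gs], of 0 1] Gut[unfolded unit_tangent_def hyp_def] G0 by simp
  have d3: "mink v1 B1 + mink B1 v1 = 0"
    using deriv_const_zero[OF mink_deriv[OF Gs Gs], of 1 1] Gut[unfolded unit_tangent_def hyp_def] G0 by simp
  have pA: "mink A1 p1 = 0" using d1 by (simp add: mink_sym[of p1 A1])
  have vB: "mink B1 v1 = 0" using d3 by (simp add: mink_sym[of v1 B1])
  have pB: "mink B1 p1 = - mink A1 v1" using d2 by (simp add: mink_sym[of p1 B1])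
  have "((\<lambda>t. endpoints (G t)) has_derivative (\<lambda>h. dE (p1,v1) (h *\<^sub>R (A1,B1)))) (at 0)"
    using has_derivative_compose[OF GD', of endpoints "dE (p1,v1)"] ut_Ediff[OF u1] G0 by simp
  moreover have "(\<lambda>t. endpoints (G t)) = c" using EG by auto
  ultimately have "(c has_derivative (\<lambda>h. dE (p1,v1) (h *\<^sub>R (A1,B1)))) (at 0)" by simp
  from has_derivative_unique[OF cD this]
  have w1: "w = dE (p1,v1) (A1,B1)" by (drule_tac x=1 in fun_cong) simp
  define al where "al = mink A1 v1"
  define A1n where "A1n = A1 - al *\<^sub>R v1"
  define B1n where "B1n = B1 - al *\<^sub>R p1"
  have n1: "mink A1n p1 = 0" "mink A1n v1 = 0" "mink B1n p1 = 0" "mink B1n v1 = 0"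
    using f1 pA vB pB by (simp_all add: A1n_def B1n_def al_def mink_simps)
  note linE = ut_dE_linear[OF u1]
  have "(A1,B1) = (A1n,B1n) + al *\<^sub>R (v1,p1)" by (simp add: A1n_def B1n_def)
  moreover have "dE (p1,v1) ((A1n,B1n) + al *\<^sub>R (v1,p1)) = dE (p1,v1) (A1n,B1n) + al *\<^sub>R dE (p1,v1) (v1,p1)"
    by (simp only: linear_add[OF linE] linear_cmul[OF linE])
  ultimately have "dE (p1,v1) (A1,B1) = dE (p1,v1) (A1n,B1n) + al *\<^sub>R dE (p1,v1) (v1,p1)"
    by simp
  hence w2: "w = dE (p1,v1) (A1n,B1n)" using w1 dE_flow[OF u1] by simp
  have "endpoints (p,v) = endpoints (p1,v1)" using e1 l_def by simp
  then obtain tt where r: "(p,v) = Rf tt (p1,v1)" using rep_R[OF u u1] by blast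
  have "dE (Rf tt (p1,v1)) (Rf tt (A1n,B1n)) = dE (p1,v1) (A1n,B1n)"
    by (rule dE_R) (use ut_time[OF u1] in auto)
  hence w3: "w = dE (p,v) (Rf tt (A1n,B1n))" using w2 r by simp
  have P: "p = cosh tt *\<^sub>R p1 + sinh tt *\<^sub>R v1" and V: "v = sinh tt *\<^sub>R p1 + cosh tt *\<^sub>R v1"
    using r by (simp_all add: Rf_def)
  define A where "A = fst (Rf tt (A1n,B1n))"
  define B where "B = snd (Rf tt (A1n,B1n))"
  have "normal_vec p v A" "normal_vec p v B"
    unfolding normal_vec_def A_def B_def Rf_def P V fst_conv snd_conv
    using n1 by (simp_all add: mink_simps)
  moreover have "w = dE (p,v) (A,B)" using w3 by (simp add: A_def B_def)
  ultimately show ?thesis by blast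
qed




lemma crossH_zero: "crossH p v 0 = 0"
proof -
  have "det (rows4 p v 0 d) = 0" for d
  proof (rule det_zero_row(1)[of 2])
    show "row 2 (rows4 p v 0 d) = 0"
      by (simp add: row_def rows4_def vec_eq_iff)
  qed
  thus ?thesis by (simp add: crossH_def vec_eq_iff)
qed

lemma normX_zero: "normX p v 0 B = 0" by (simp add: normX_def crossH_zero)

lemma SD:
  assumes as: "almost_semidefinite M" and u: "unit_tangent p v" and x: "endpoints (p,v) \<in> M"
    and B: "normal_vec p v B" and T: "dE (p,v) (0,B) \<in> tangent_space M (endpoints (p,v))"
  shows "B = 0"
proof -
  have n0: "normal_vec p v 0" by (simp add: normal_vec_def)
  have "normK p v 0 B \<ge> 0"
    using as[unfolded almost_semidefinite_def, rule_format, of p v 0 B] u x n0 B T normX_zero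
    unfolding Tgeo_dE by simp
  hence "mink B B \<le> 0" by (simp add: normK_def)
  moreover have "mink B B \<ge> 0" "mink B B = 0 \<Longrightarrow> B = 0"
    using spacelike[of p B] ut_facts[OF u] B by (auto simp: normal_vec_def)
  ultimately show ?thesis by linarith
qed

lemma chart_at:
  assumes S: "surface2 M" and x: "x \<in> M"
  obtains U and V :: "(real^2) set" and \<phi> \<psi> y0 \<phi>' where "open U" "x \<in> U" "open V" "homeomorphism V (M \<inter> U) \<phi> \<psi>"
    "y0 \<in> V" "\<phi> y0 = x" "(\<phi> has_derivative \<phi>') (at y0)" "inj \<phi>'" "linear \<phi>'"
    "\<And>e. \<phi>' e \<in> tangent_space M x"
proof -
  obtain U and V :: "(real^2) set" and \<phi> \<psi> where U: "open U" "x \<in> U" "open V"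
    "homeomorphism V (M \<inter> U) \<phi> \<psi>" and D: "\<forall>y\<in>V. \<exists>\<phi>'. (\<phi> has_derivative \<phi>') (at y) \<and> inj \<phi>'"
    using S[unfolded surface2_def, rule_format, OF x] by blast
  have im: "\<phi> ` V = M \<inter> U" using U(4) by (simp add: homeomorphism_def)
  have "x \<in> \<phi> ` V" using im x U(2) by simp
  then obtain y0 where y0: "y0 \<in> V" "\<phi> y0 = x" by (auto simp del: im)
  obtain \<phi>' where d: "(\<phi> has_derivative \<phi>') (at y0)" "inj \<phi>'" using D y0 by blast
  have lin: "linear \<phi>'" using d(1) has_derivative_bounded_linear bounded_linear.linear by blast
  obtain r where r: "r > 0" "ball y0 r \<subseteq> V" using U(3) y0(1) open_contains_ball by blast
  have tg: "\<phi>' e \<in> tangent_space M x" for e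
  proof (cases "e = 0")
    case True
    have "((\<lambda>t. x) has_vector_derivative 0) (at 0)" by (rule has_vector_derivative_const)
    moreover have "\<phi>' e = 0" using True linear_0[OF lin] by simp
    ultimately show ?thesis unfolding tangent_space_def using x by auto
  next
    case False
    define k where "k = r / (2 * norm e)"
    have k: "k > 0" using r False by (simp add: k_def)
    define h where "h = (\<lambda>t. y0 + (k * sin (t / k)) *\<^sub>R e)"
    have hd1: "((\<lambda>t. k * sin (t / k)) has_real_derivative 1) (at 0)"
      using k by (auto intro!: derivative_eq_intros)
    have hd: "(h has_derivative (\<lambda>s. s *\<^sub>R e)) (at 0)"
    proof -
      have "((\<lambda>t. (k * sin (t / k)) *\<^sub>R e) has_derivative (\<lambda>s. (1 * s) *\<^sub>R e)) (at 0)"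
        using has_derivative_scaleR_left[OF hd1[unfolded has_field_derivative_def], of e] by simp
      hence "((\<lambda>t. (k * sin (t / k)) *\<^sub>R e) has_derivative (\<lambda>s. s *\<^sub>R e)) (at 0)"
        by simp
      from has_derivative_add[OF has_derivative_const[of y0] this] show ?thesis unfolding h_def by simp
    qed
    have h0: "h 0 = y0" by (simp add: h_def)
    have hV: "h t \<in> V" for t
    proof -
      have "\<bar>k * sin (t / k)\<bar> \<le> k" using k abs_sin_le_one[of "t/k"] by (simp add: abs_mult)
      hence "norm ((k * sin (t / k)) *\<^sub>R e) \<le> k * norm e" by (simp add: mult_right_mono)
      also have "\<dots> < r" using r False by (simp add: k_def)
      finally have "h t \<in> ball y0 r" by (simp add: h_def dist_norm)
      thus ?thesis using r by auto
    qed
    define c where "c = (\<lambda>t. \<phi> (h t))"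
    have cM: "c t \<in> M" for t using hV im by (auto simp: c_def)
    have "(c has_derivative (\<lambda>s. \<phi>' (s *\<^sub>R e))) (at 0)"
      unfolding c_def using has_derivative_compose[OF hd, of \<phi> \<phi>'] d(1) h0 by simp
    moreover have "(\<lambda>s. \<phi>' (s *\<^sub>R e)) = (\<lambda>s. s *\<^sub>R \<phi>' e)" using linear_cmul[OF lin] by auto
    ultimately have "(c has_vector_derivative \<phi>' e) (at 0)" by (simp add: has_vector_derivative_def)
    moreover have "c 0 = x" using h0 y0 by (simp add: c_def)
    ultimately show ?thesis unfolding tangent_space_def using cM by blast
  qed
  show ?thesis by (rule that[OF U(1) U(2) U(3) U(4) y0 d lin]) (rule tg)
qed




lemma normal_span:
  assumes u: "unit_tangent p v" and a1: "normal_vec p v A1" and a2: "normal_vec p v A2"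
    and ind: "\<And>c1 c2. c1 *\<^sub>R A1 + c2 *\<^sub>R A2 = 0 \<Longrightarrow> c1 = 0 \<and> c2 = 0"
    and w: "normal_vec p v w"
  shows "\<exists>c1 c2. w = c1 *\<^sub>R A1 + c2 *\<^sub>R A2"
proof -
  note f = ut_facts[OF u]
  have n: "mink A1 p = 0" "mink A1 v = 0" "mink A2 p = 0" "mink A2 v = 0" "mink w p = 0" "mink w v = 0"
    using a1 a2 w by (auto simp: normal_vec_def)
  define Lm where "Lm = (\<lambda>c::real^4. c$0 *\<^sub>R p + c$1 *\<^sub>R v + c$2 *\<^sub>R A1 + c$3 *\<^sub>R A2)"
  have lin: "linear Lm" unfolding Lm_def
    by (rule linearI) (simp_all add: algebra_simps)
  have mp: "mink (Lm c) p = - c$0" "mink (Lm c) v = c$1" for c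
    using f n by (simp_all add: Lm_def mink_simps)
  have ker: "Lm c = 0 \<Longrightarrow> c = 0" for c
  proof -
    assume z: "Lm c = 0"
    have c0: "c$0 = 0" "c$1 = 0" using mp[of c] z by simp_all
    hence "c$2 *\<^sub>R A1 + c$3 *\<^sub>R A2 = 0" using z by (simp add: Lm_def)
    hence "c$2 = 0" "c$3 = 0" using ind by blast+
    thus "c = 0" using c0 by (simp add: vec4_eq)
  qed
  have "inj Lm"
  proof (rule injI)
    fix a b assume "Lm a = Lm b"
    hence "Lm (a - b) = 0" using linear_diff[OF lin] by simp
    thus "a = b" using ker[of "a - b"] by simp
  qed
  hence "surj Lm" using eucl.linear_injective_imp_surjective[OF lin] by simp
  then obtain c where c: "w = Lm c" by (metis surjD)
  have "c$0 = 0" "c$1 = 0" using mp[of c] c n by simp_all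
  hence "w = c$2 *\<^sub>R A1 + c$3 *\<^sub>R A2" using c by (simp add: Lm_def)
  thus ?thesis by blast
qed

lemma tangent_in_range:
  assumes hML: "M \<subseteq> Lspace" and u: "unit_tangent p v"
    and t: "z \<in> tangent_space M (endpoints (p,v))"
  shows "\<exists>A B. normal_vec p v A \<and> normal_vec p v B \<and> z = dE (p,v) (A,B)"
proof -
  obtain c where c: "\<forall>t. c t \<in> M" "c 0 = endpoints (p,v)" "(c has_vector_derivative z) (at 0)"
    using t unfolding tangent_space_def by blast
  show ?thesis by (rule tangent_lift[OF u]) (use c hML in auto)
qed

lemma partA:
  assumes S: "surface2 M" and hML: "M \<subseteq> Lspace" and as: "almost_semidefinite M"
    and u: "unit_tangent p v" and xM: "endpoints (p,v) \<in> M" and w: "normal_vec p v w"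
  shows "\<exists>B. normal_vec p v B \<and> Tgeo p v w B \<in> tangent_space M (endpoints (p,v))"
proof -
  obtain U and V :: "(real^2) set" and \<phi> \<psi> y0 \<phi>' where "open U" "endpoints (p,v) \<in> U" "open V"
    "homeomorphism V (M \<inter> U) \<phi> \<psi>" "y0 \<in> V" "\<phi> y0 = endpoints (p,v)"
    and ch: "(\<phi> has_derivative \<phi>') (at y0)" "inj \<phi>'" "linear \<phi>'"
    and tg: "\<And>e. \<phi>' e \<in> tangent_space M (endpoints (p,v))"
    by (rule chart_at[OF S xM]) blast
  have lift: "\<exists>A B. normal_vec p v A \<and> normal_vec p v B \<and> \<phi>' e = dE (p,v) (A,B)" for e
    by (rule tangent_in_range[OF hML u tg])
  define e1 :: "real^2" where "e1 = axis 1 1"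
  define e2 :: "real^2" where "e2 = axis 2 1"
  obtain A1 B1 where 1: "normal_vec p v A1" "normal_vec p v B1" "\<phi>' e1 = dE (p,v) (A1,B1)"
    using lift by blast
  obtain A2 B2 where 2: "normal_vec p v A2" "normal_vec p v B2" "\<phi>' e2 = dE (p,v) (A2,B2)"
    using lift by blast
  note linE = ut_dE_linear[OF u]
  have comb: "\<phi>' (c1 *\<^sub>R e1 + c2 *\<^sub>R e2) = dE (p,v) (c1 *\<^sub>R A1 + c2 *\<^sub>R A2, c1 *\<^sub>R B1 + c2 *\<^sub>R B2)" for c1 c2
  proof -
    have "\<phi>' (c1 *\<^sub>R e1 + c2 *\<^sub>R e2) = c1 *\<^sub>R \<phi>' e1 + c2 *\<^sub>R \<phi>' e2"
      by (simp only: linear_add[OF ch(3)] linear_cmul[OF ch(3)])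
    also have "\<dots> = c1 *\<^sub>R dE (p,v) (A1,B1) + c2 *\<^sub>R dE (p,v) (A2,B2)" using 1 2 by simp
    also have "\<dots> = dE (p,v) (c1 *\<^sub>R (A1,B1) + c2 *\<^sub>R (A2,B2))"
      by (simp only: linear_add[OF linE] linear_cmul[OF linE])
    finally show ?thesis by simp
  qed
  have nlin: "normal_vec p v (c1 *\<^sub>R X + c2 *\<^sub>R Y)" if "normal_vec p v X" "normal_vec p v Y" for c1 c2 X Y
    using that by (simp add: normal_vec_def mink_simps)
  have ind: "c1 = 0 \<and> c2 = 0" if z: "c1 *\<^sub>R A1 + c2 *\<^sub>R A2 = 0" for c1 c2
  proof -
    have t: "dE (p,v) (0, c1 *\<^sub>R B1 + c2 *\<^sub>R B2) \<in> tangent_space M (endpoints (p,v))"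
      using tg[of "c1 *\<^sub>R e1 + c2 *\<^sub>R e2"] comb[of c1 c2] z by simp
    have "c1 *\<^sub>R B1 + c2 *\<^sub>R B2 = 0" by (rule SD[OF as u xM nlin[OF 1(2) 2(2)] t])
    hence "\<phi>' (c1 *\<^sub>R e1 + c2 *\<^sub>R e2) = dE (p,v) 0" using comb[of c1 c2] z by (simp add: zero_prod_def)
    also have "\<dots> = 0" by (rule linear_0[OF linE])
    finally have "\<phi>' (c1 *\<^sub>R e1 + c2 *\<^sub>R e2) = \<phi>' 0" using linear_0[OF ch(3)] by simp
    hence e0: "c1 *\<^sub>R e1 + c2 *\<^sub>R e2 = 0" using ch(2) by (simp add: inj_eq)
    have h1: "(c1 *\<^sub>R e1 + c2 *\<^sub>R e2) $ 1 = c1" and h2: "(c1 *\<^sub>R e1 + c2 *\<^sub>R e2) $ 2 = c2"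
      by (simp_all add: e1_def e2_def axis_def)
    from h1 h2 show ?thesis unfolding e0 by simp
  qed
  obtain c1 c2 where wc: "w = c1 *\<^sub>R A1 + c2 *\<^sub>R A2"
    using normal_span[OF u 1(1) 2(1) ind w] by blast
  define B where "B = c1 *\<^sub>R B1 + c2 *\<^sub>R B2"
  have "normal_vec p v B" unfolding B_def by (rule nlin[OF 1(2) 2(2)])
  moreover have "Tgeo p v w B \<in> tangent_space M (endpoints (p,v))"
    using tg[of "c1 *\<^sub>R e1 + c2 *\<^sub>R e2"] comb[of c1 c2] by (simp add: Tgeo_dE wc B_def)
  ultimately show ?thesis by blast
qed




definition Ff :: "real^4 \<Rightarrow> (real^4) \<times> (real^4) \<Rightarrow> real" where
  "Ff oq z = -2 * mink oq (fst z) * mink oq (snd z) / mink (fst z) (snd z)"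

definition Gf :: "real \<Rightarrow> real" where "Gf s = arcosh (sqrt s) ^ 2"

lemma F_E_gen:
  assumes "p$0 + v$0 \<noteq> 0" "p$0 - v$0 \<noteq> 0"
  shows "Ff oq (endpoints (p,v)) = -2 * (mink oq p ^ 2 - mink oq v ^ 2) / (mink p p - mink v v)"
proof -
  define a where "a = inverse (p$0 + v$0)"
  define b where "b = inverse (p$0 - v$0)"
  have ab: "a \<noteq> 0" "b \<noteq> 0" using assms by (simp_all add: a_def b_def)
  have e: "endpoints (p,v) = (a *\<^sub>R (p+v), b *\<^sub>R (p-v))" by (simp add: endpoints_def a_def b_def)
  have "Ff oq (endpoints (p,v)) = -2 * (a * b * (mink oq p ^ 2 - mink oq v ^ 2)) / (a * b * (mink p p - mink v v))"
    unfolding e Ff_def by (simp add: mink_simps mink_sym[of v p] power2_eq_square algebra_simps)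
  also have "\<dots> = -2 * (mink oq p ^ 2 - mink oq v ^ 2) / (mink p p - mink v v)"
    using ab by (cases "mink p p - mink v v = 0") (simp_all add: field_simps)
  finally show ?thesis .
qed

lemma F_E:
  assumes u: "unit_tangent p v"
  shows "Ff oq (endpoints (p,v)) = mink oq p ^ 2 - mink oq v ^ 2"
proof -
  have "p$0 + v$0 \<noteq> 0" "p$0 - v$0 \<noteq> 0" using ut_time[OF u] by auto
  from F_E_gen[OF this, of oq] show ?thesis using ut_facts[OF u] by (simp add: field_simps)
qed

lemma arcosh_mono_le: "1 \<le> x \<Longrightarrow> x \<le> y \<Longrightarrow> arcosh x \<le> arcosh (y::real)"
  using arcosh_real_strict_mono[of x y] by (cases "x < y") (auto simp del: arcosh_less_iff_real)

lemma D_formula: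
  assumes o: "oq \<in> hyp" and l: "l \<in> Lspace"
  shows "Dfun oq l = Gf (Ff oq l)" "Ff oq l \<ge> 1"
proof -
  obtain p v where u: "unit_tangent p v" and e: "endpoints (p,v) = l" and b0: "mink oq v = 0"
    using foot_rep[OF l o] by blast
  define a where "a = - mink oq p"
  note d = decomp[OF u o]
  have a0: "a > 0" using d(4) by (simp add: a_def)
  have Fl: "Ff oq l = a^2" using F_E[OF u, of oq] e b0 by (simp add: a_def)
  have a1: "1^2 \<le> a^2" using d(2,3) b0 by (simp add: a_def)
  have a1': "1 \<le> a" using power2_le_imp_le[OF a1] a0 by simp
  show "Ff oq l \<ge> 1" using Fl a1 by simp
  define S :: "((real^4) \<times> (real^4) \<times> real) set" where "S = {(p, v, t). unit_tangent p v \<and> endpoints (p, v) = l}"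
  define f where "f = (\<lambda>z. hdist oq (geod (fst z) (fst (snd z)) (snd (snd z))))"
  have Dl: "Dfun oq l = (Inf (f ` S))^2" by (simp add: Dfun_def S_def f_def)
  have mem: "(p,v,0) \<in> S" using u e by (simp add: S_def)
  have fmem: "f (p,v,0) = arcosh a" by (simp add: f_def hdist_def geod_def a_def)
  have lower: "arcosh a \<le> f z" if z: "z \<in> S" for z
  proof -
    obtain p' v' t where zz: "z = (p',v',t)" by (cases z) auto
    have u': "unit_tangent p' v'" and e': "endpoints (p',v') = l" using z zz by (auto simp: S_def)
    define q where "q = cosh t *\<^sub>R p' + sinh t *\<^sub>R v'"
    have "q \<in> hyp" using UT_R[OF u', of t] by (simp add: Rf_def q_def unit_tangent_def)
    hence X0: "- mink oq q > 0" using mink_neg[OF o, of q] by (simp add: hyp_def)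
    define a' where "a' = - mink oq p'"
    define b' where "b' = - mink oq v'"
    have X: "- mink oq q = a' * cosh t + b' * sinh t" by (simp add: q_def mink_simps a'_def b'_def)
    have F': "a'^2 - b'^2 = a^2" using F_E[OF u', of oq] e' Fl by (simp add: a'_def b'_def)
    have cs: "cosh t ^ 2 = sinh t ^ 2 + 1" by (rule cosh_square_eq)
    have "(a' * cosh t + b' * sinh t)^2 - (a'^2 - b'^2) = (a' * sinh t + b' * cosh t)^2"
      using cs by (simp add: power2_eq_square algebra_simps)
    hence "a^2 \<le> (- mink oq q)^2" using F' X by (smt (verit) zero_le_power2)
    hence aX: "a \<le> - mink oq q" using power2_le_imp_le[of a "- mink oq q"] X0 by simp
    have "f z = arcosh (- mink oq q)" by (simp add: zz f_def hdist_def geod_def q_def)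
    thus ?thesis using arcosh_mono_le[OF a1' aX] by simp
  qed
  have "Inf (f ` S) = arcosh a"
  proof (rule cInf_eq_minimum)
    show "arcosh a \<in> f ` S" using mem fmem by (metis image_eqI)
    show "\<And>x. x \<in> f ` S \<Longrightarrow> arcosh a \<le> x" using lower by blast
  qed
  hence "Dfun oq l = arcosh a ^ 2" using Dl by simp
  moreover have "Gf (Ff oq l) = arcosh a ^ 2" using Fl a0 by (simp add: Gf_def)
  ultimately show "Dfun oq l = Gf (Ff oq l)" by simp
qed




definition dF :: "real^4 \<Rightarrow> (real^4) \<times> (real^4) \<Rightarrow> (real^4) \<times> (real^4) \<Rightarrow> real" where
  "dF oq z = frechet_derivative (Ff oq) (at z)"

lemma F_hasderiv:
  assumes "mink (fst z) (snd z) \<noteq> 0"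
  shows "(Ff oq has_derivative dF oq z) (at z)"
proof -
  have "Ff oq differentiable (at z)"
    unfolding differentiable_def Ff_def[abs_def]
    apply (rule exI)
    using assms apply -
    apply (rule derivative_intros | simp)+
    done
  thus ?thesis unfolding dF_def frechet_derivative_works .
qed

definition Gd :: "real \<Rightarrow> real" where
  "Gd s = 2 * arcosh (sqrt s) * (1 / sqrt ((sqrt s)^2 - 1)) * (inverse (sqrt s) / 2)"

lemma G_deriv:
  assumes "s > 1"
  shows "(Gf has_real_derivative Gd s) (at s)" "Gd s > 0"
proof -
  have s1: "sqrt s > 1" using assms by simp
  have "((\<lambda>s. arcosh (sqrt s)) has_real_derivative (1 / sqrt ((sqrt s)^2 - 1)) * (inverse (sqrt s) / 2)) (at s)"
    using DERIV_chain[OF arcosh_real_has_field_derivative[of "sqrt s" UNIV] DERIV_real_sqrt[of s]] s1 assms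
    by (simp add: o_def)
  from DERIV_power[OF this, of 2]
  show "(Gf has_real_derivative Gd s) (at s)"
    unfolding Gf_def[abs_def] Gd_def by (simp add: algebra_simps)
  have "arcosh (sqrt s) > 0" using s1 by simp
  moreover have "sqrt ((sqrt s)^2 - 1) > 0" using assms by simp
  ultimately show "Gd s > 0" using assms by (simp add: Gd_def)
qed




lemma critical_D0:
  assumes S: "surface2 M" and hML: "M \<subseteq> Lspace" and as: "almost_semidefinite M"
    and o: "oq \<in> hyp" and cr: "critical_on M (Dfun oq) l"
  shows "Dfun oq l = 0"
proof (rule ccontr)
  assume nz: "Dfun oq l \<noteq> 0"
  have lM: "l \<in> M" using cr by (simp add: critical_on_def)
  have crit: "\<And>c w. \<forall>t. c t \<in> M \<Longrightarrow> c 0 = l \<Longrightarrow> (c has_vector_derivative w) (at 0) \<Longrightarrow>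
      ((Dfun oq \<circ> c) has_real_derivative 0) (at 0)"
    using cr unfolding critical_on_def by blast
  have lL: "l \<in> Lspace" using lM hML by auto
  obtain p v where u: "unit_tangent p v" and e: "endpoints (p,v) = l" and b0: "mink oq v = 0"
    using foot_rep[OF lL o] by blast
  note f = ut_facts[OF u]
  define a where "a = - mink oq p"
  define N where "N = oq + mink oq p *\<^sub>R p - mink oq v *\<^sub>R v"
  define nn where "nn = mink N N"
  note d = decomp[OF u o, folded N_def]
  have nN: "normal_vec p v N" by (rule d(1))
  have a0: "a > 0" using d(4) by (simp add: a_def)
  have aa: "a^2 = 1 + nn" using d(2) b0 by (simp add: a_def nn_def)
  have Fl: "Ff oq l = a^2" using F_E[OF u, of oq] e b0 by (simp add: a_def)
  have a1: "1 \<le> a" using power2_le_imp_le[of 1 a] aa d(3) a0 by (simp add: nn_def)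
  have "Dfun oq l = arcosh a ^ 2" using D_formula(1)[OF o lL] Fl a0 by (simp add: Gf_def)
  hence "a \<noteq> 1" using nz by auto
  hence a1': "a > 1" using a1 by simp
  hence "a^2 > 1" by (simp add: one_less_power)
  hence nn0: "nn > 0" using aa by simp
  obtain B where nB: "normal_vec p v B" and tB: "Tgeo p v N B \<in> tangent_space M (endpoints (p,v))"
    using partA[OF S hML as u _ nN] lM e by blast
  define w where "w = dE (p,v) (N,B)"
  obtain c where c: "\<forall>t. c t \<in> M" "c 0 = l" "(c has_vector_derivative w) (at 0)"
    using tB e unfolding tangent_space_def Tgeo_dE w_def by blast
  have D0: "((Dfun oq \<circ> c) has_real_derivative 0) (at 0)" by (rule crit[OF c])
  have lc: "l \<in> Lchar" using lL Lspace_eq by simp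
  have Fd: "(Ff oq has_derivative dF oq l) (at l)" using F_hasderiv Lchar_mink[OF lc] by simp
  have linF: "linear (dF oq l)" using Fd has_derivative_bounded_linear bounded_linear.linear by blast
  have cD: "(c has_derivative (\<lambda>h. h *\<^sub>R w)) (at 0)" using c(3) by (simp add: has_vector_derivative_def)
  have "((\<lambda>t. Ff oq (c t)) has_derivative (\<lambda>h. dF oq l (h *\<^sub>R w))) (at 0)"
    using has_derivative_compose[OF cD, of "Ff oq" "dF oq l"] Fd c(2) by simp
  moreover have "(\<lambda>h. dF oq l (h *\<^sub>R w)) = (*) (dF oq l w)"
    using linear_cmul[OF linF] by (auto simp: fun_eq_iff)
  ultimately have Fc: "((\<lambda>t. Ff oq (c t)) has_real_derivative dF oq l w) (at 0)"
    by (simp add: has_field_derivative_def)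
  have "((Gf \<circ> (\<lambda>t. Ff oq (c t))) has_real_derivative Gd (a^2) * dF oq l w) (at 0)"
    using DERIV_chain[OF _ Fc, of Gf] G_deriv(1)[of "a^2"] \<open>a^2 > 1\<close> c(2) Fl by simp
  moreover have "Gf \<circ> (\<lambda>t. Ff oq (c t)) = Dfun oq \<circ> c"
  proof (rule ext)
    fix t have "c t \<in> Lspace" using c(1) hML by auto
    thus "(Gf \<circ> (\<lambda>t. Ff oq (c t))) t = (Dfun oq \<circ> c) t" using D_formula(1)[OF o] by simp
  qed
  ultimately have "Gd (a^2) * dF oq l w = 0" using D0 DERIV_unique by metis
  hence dFw: "dF oq l w = 0" using G_deriv(2)[of "a^2"] \<open>a^2 > 1\<close> by simp
  \<comment> \<open>Now compute the same derivative explicitly.\<close>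
  define be where "be = mink oq N"
  define ga where "ga = mink oq B"
  define bb where "bb = mink B B"
  have be: "be = nn" using aa b0 o by (simp add: be_def N_def nn_def a_def mink_simps mink_sym[of p oq] mink_sym[of v oq] hyp_def f power2_eq_square)
  define g where "g = (\<lambda>s::real. (p + s *\<^sub>R N, v + s *\<^sub>R B))"
  have gd: "(g has_derivative (\<lambda>h. h *\<^sub>R (N,B))) (at 0)"
  proof -
    have "(g has_derivative (\<lambda>h. (0 + h *\<^sub>R N, 0 + h *\<^sub>R B))) (at 0)"
      unfolding g_def
      by (intro has_derivative_Pair has_derivative_add has_derivative_const
          has_derivative_scaleR_left has_derivative_ident)
    thus ?thesis by simp
  qed
  have g0: "g 0 = (p,v)" by (simp add: g_def)
  define K where "K = (\<lambda>s. Ff oq (endpoints (g s)))"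
  have linE: "linear (dE (p,v))" by (rule ut_dE_linear[OF u])
  have "(K has_derivative (\<lambda>h. dF oq l (dE (p,v) (h *\<^sub>R (N,B))))) (at 0)"
  proof -
    have 1: "((\<lambda>s. endpoints (g s)) has_derivative (\<lambda>h. dE (p,v) (h *\<^sub>R (N,B)))) (at 0)"
      using has_derivative_compose[OF gd, of endpoints "dE (p,v)"] ut_Ediff[OF u] g0 by simp
    show ?thesis unfolding K_def
      using has_derivative_compose[OF 1, of "Ff oq" "dF oq l"] Fd g0 e by simp
  qed
  moreover have "(\<lambda>h. dF oq l (dE (p,v) (h *\<^sub>R (N,B)))) = (*) (dF oq l w)"
  proof (rule ext)
    fix h
    have "dE (p,v) (h *\<^sub>R (N,B)) = h *\<^sub>R w" unfolding w_def by (rule linear_cmul[OF linE])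
    moreover have "dF oq l (h *\<^sub>R w) = h *\<^sub>R dF oq l w" by (rule linear_cmul[OF linF])
    ultimately show "dF oq l (dE (p,v) (h *\<^sub>R (N,B))) = dF oq l w * h" by simp
  qed
  ultimately have Kd: "(K has_real_derivative dF oq l w) (at 0)" by (simp add: has_field_derivative_def)
  define k where "k = (\<lambda>s::real. -2 * ((- a + s * be)^2 - (s * ga)^2) / (-2 + s^2 * (nn - bb)))"
  have kd: "(k has_real_derivative 2 * (- a) * be) (at 0)"
    unfolding k_def by (auto intro!: derivative_eq_intros simp: power2_eq_square)
  define Z where "Z = {s::real. p$0 + s * N$0 + (v$0 + s * B$0) \<noteq> 0} \<inter> {s. p$0 + s * N$0 - (v$0 + s * B$0) \<noteq> 0}"
  have Zo: "open Z" unfolding Z_def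
    by (intro open_Int open_Collect_neq continuous_intros)
  have Z0: "0 \<in> Z" using ut_time[OF u] by (auto simp: Z_def)
  have Kk: "k s = K s" if s: "s \<in> Z" for s
  proof -
    have c1: "(p + s *\<^sub>R N)$0 + (v + s *\<^sub>R B)$0 \<noteq> 0" "(p + s *\<^sub>R N)$0 - (v + s *\<^sub>R B)$0 \<noteq> 0"
      using s by (auto simp: Z_def)
    have ma: "mink oq p = - a" by (simp add: a_def)
    have "K s = -2 * (mink oq (p + s *\<^sub>R N) ^ 2 - mink oq (v + s *\<^sub>R B) ^ 2) /
         (mink (p + s *\<^sub>R N) (p + s *\<^sub>R N) - mink (v + s *\<^sub>R B) (v + s *\<^sub>R B))"
      unfolding K_def g_def by (rule F_E_gen[OF c1])
    also have "\<dots> = k s"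
      using f nN nB b0 unfolding k_def normal_vec_def
      by (simp add: mink_simps mink_sym[of p N] mink_sym[of v B] ma be_def[symmetric]
          ga_def[symmetric] nn_def[symmetric] bb_def[symmetric] power2_eq_square algebra_simps)
    finally show ?thesis by simp
  qed
  have "(K has_real_derivative 2 * (- a) * be) (at 0)"
    by (rule has_field_derivative_transform_within_open[OF kd Zo Z0 Kk])
  hence "dF oq l w = 2 * (- a) * be" using Kd DERIV_unique by blast
  thus False using dFw a0 nn0 be by simp
qed




lemma local_inj:
  fixes f :: "real^2 \<Rightarrow> real^4"
  assumes d: "(f has_derivative L) (at y0)" and i: "inj L"
  shows "\<exists>r>0. \<forall>y. dist y y0 < r \<and> y \<noteq> y0 \<longrightarrow> f y \<noteq> f y0"
proof -
  have lin: "linear L" using d has_derivative_bounded_linear bounded_linear.linear by blast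
  obtain m where m: "m > 0" "\<And>x. m * norm x \<le> norm (L x)"
    using linear_inj_bounded_below_pos[OF lin i] by blast
  obtain r where r: "r > 0" "\<And>y. norm (y - y0) < r \<Longrightarrow> norm (f y - f y0 - L (y - y0)) \<le> (m/2) * norm (y - y0)"
    using d[unfolded has_derivative_at_alt] m(1) by (meson half_gt_zero)
  have "f y \<noteq> f y0" if y: "dist y y0 < r" "y \<noteq> y0" for y
  proof
    assume eq: "f y = f y0"
    have "norm (L (y - y0)) \<le> (m/2) * norm (y - y0)" using r(2)[of y] y eq by (simp add: dist_norm)
    moreover have "m * norm (y - y0) \<le> norm (L (y - y0))" by (rule m(2))
    moreover have "norm (y - y0) > 0" using y by simp
    moreover have "(m/2) * norm (y - y0) > 0" using m(1) y by simp
    ultimately show False by linarith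
  qed
  thus ?thesis using r(1) by blast
qed

definition Xf :: "real^4 \<Rightarrow> (real^4) \<times> (real^4) \<Rightarrow> real^4" where
  "Xf oq z = oq - inverse (mink (fst z) (snd z)) *\<^sub>R (mink oq (snd z) *\<^sub>R fst z + mink oq (fst z) *\<^sub>R snd z)"

lemma X_props:
  assumes o: "oq \<in> hyp" and l: "l \<in> Lchar"
  shows "mink (Xf oq l) (Xf oq l) = Ff oq l - 1" "mink (Xf oq l) (fst l + snd l) = 0"
    "mink (fst l + snd l) (fst l + snd l) < 0"
proof -
  obtain x y where z: "l = (x,y)" by force
  have h: "mink x x = 0" "mink y y = 0" "mink x y < 0" using l z by (auto simp: Lchar_def)
  have oo: "mink oq oq = -1" using o by (simp add: hyp_def)
  show "mink (fst l + snd l) (fst l + snd l) < 0" using h z by (simp add: mink_simps mink_sym[of y x])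
  show "mink (Xf oq l) (fst l + snd l) = 0" using h z
    by (simp add: Xf_def mink_simps mink_sym[of y x] field_simps)
  show "mink (Xf oq l) (Xf oq l) = Ff oq l - 1" using h z oo
    by (simp add: Xf_def Ff_def mink_simps mink_sym[of y x] mink_sym[of x oq] mink_sym[of y oq]
        field_simps power2_eq_square)
qed

lemma X_nonzero_D:
  assumes o: "oq \<in> hyp" and l: "l \<in> Lspace" and X: "Xf oq l \<noteq> 0"
  shows "Dfun oq l > 0"
proof -
  have lc: "l \<in> Lchar" using l Lspace_eq by simp
  note xp = X_props[OF o lc]
  have "mink (Xf oq l) (Xf oq l) \<ge> 0" "mink (Xf oq l) (Xf oq l) = 0 \<Longrightarrow> Xf oq l = 0"
    using spacelike[OF xp(3) xp(2)] by auto
  hence "mink (Xf oq l) (Xf oq l) > 0" using X by linarith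
  hence F1: "Ff oq l > 1" using xp(1) by simp
  hence "sqrt (Ff oq l) > 1" by simp
  hence "arcosh (sqrt (Ff oq l)) > 0" by simp
  thus ?thesis using D_formula(1)[OF o l] by (simp add: Gf_def)
qed

lemma X_E_gen:
  assumes "p$0 + v$0 \<noteq> 0" "p$0 - v$0 \<noteq> 0"
  shows "Xf oq (endpoints (p,v)) = oq - inverse (mink p p - mink v v) *\<^sub>R
             ((2 * mink oq p) *\<^sub>R p - (2 * mink oq v) *\<^sub>R v)"
proof -
  define a where "a = inverse (p$0 + v$0)"
  define b where "b = inverse (p$0 - v$0)"
  have ab: "a \<noteq> 0" "b \<noteq> 0" using assms by (simp_all add: a_def b_def)
  have e: "endpoints (p,v) = (a *\<^sub>R (p+v), b *\<^sub>R (p-v))" by (simp add: endpoints_def a_def b_def)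
  have m: "mink (a *\<^sub>R (p+v)) (b *\<^sub>R (p-v)) = (a*b) * (mink p p - mink v v)"
    by (simp add: mink_simps mink_sym[of v p] algebra_simps)
  have w: "mink oq (b *\<^sub>R (p-v)) *\<^sub>R (a *\<^sub>R (p+v)) + mink oq (a *\<^sub>R (p+v)) *\<^sub>R (b *\<^sub>R (p-v))
        = (a*b) *\<^sub>R ((2 * mink oq p) *\<^sub>R p - (2 * mink oq v) *\<^sub>R v)"
    by (simp add: mink_simps vec_eq_iff algebra_simps)
  have c: "inverse ((a*b) * Q) *\<^sub>R ((a*b) *\<^sub>R W) = inverse Q *\<^sub>R W" for Q and W :: "real^4"
    using ab by (cases "Q = 0") (simp_all add: field_simps)
  show ?thesis unfolding e Xf_def fst_conv snd_conv m w c ..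
qed




definition dX :: "real^4 \<Rightarrow> (real^4) \<times> (real^4) \<Rightarrow> (real^4) \<times> (real^4) \<Rightarrow> real^4" where
  "dX oq z = frechet_derivative (Xf oq) (at z)"

lemma X_hasderiv:
  assumes "mink (fst z) (snd z) \<noteq> 0"
  shows "(Xf oq has_derivative dX oq z) (at z)"
proof -
  have "Xf oq differentiable (at z)"
    unfolding differentiable_def Xf_def[abs_def]
    apply (rule exI)
    using assms apply -
    apply (rule derivative_intros | simp)+
    done
  thus ?thesis unfolding dX_def frechet_derivative_works .
qed

lemma dXE:
  assumes u: "unit_tangent p v" and nA: "normal_vec p v A" and nB: "normal_vec p v B"
  shows "dX p (endpoints (p,v)) (dE (p,v) (A,B)) = - A"
proof -
  note f = ut_facts[OF u]
  define l where "l = endpoints (p,v)"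
  have lc: "l \<in> Lchar" using E_Lchar(1)[OF u] by (simp add: l_def)
  have Xd: "(Xf p has_derivative dX p l) (at l)" using X_hasderiv Lchar_mink[OF lc] by simp
  have linX: "linear (dX p l)" using Xd has_derivative_bounded_linear bounded_linear.linear by blast
  have linE: "linear (dE (p,v))" by (rule ut_dE_linear[OF u])
  define W where "W = dX p l (dE (p,v) (A,B))"
  define g where "g = (\<lambda>s::real. (p + s *\<^sub>R A, v + s *\<^sub>R B))"
  have gd: "(g has_derivative (\<lambda>h. h *\<^sub>R (A,B))) (at 0)"
  proof -
    have "(g has_derivative (\<lambda>h. (0 + h *\<^sub>R A, 0 + h *\<^sub>R B))) (at 0)"
      unfolding g_def
      by (intro has_derivative_Pair has_derivative_add has_derivative_const
          has_derivative_scaleR_left has_derivative_ident)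
    thus ?thesis by simp
  qed
  have g0: "g 0 = (p,v)" by (simp add: g_def)
  define K where "K = (\<lambda>s. Xf p (endpoints (g s)))"
  have "(K has_derivative (\<lambda>h. dX p l (dE (p,v) (h *\<^sub>R (A,B))))) (at 0)"
  proof -
    have 1: "((\<lambda>s. endpoints (g s)) has_derivative (\<lambda>h. dE (p,v) (h *\<^sub>R (A,B)))) (at 0)"
      using has_derivative_compose[OF gd, of endpoints "dE (p,v)"] ut_Ediff[OF u] g0 by simp
    show ?thesis unfolding K_def
      using has_derivative_compose[OF 1, of "Xf p" "dX p l"] Xd g0 l_def by simp
  qed
  moreover have "(\<lambda>h. dX p l (dE (p,v) (h *\<^sub>R (A,B)))) = (\<lambda>h. h *\<^sub>R W)"
  proof (rule ext)
    fix h
    have "dE (p,v) (h *\<^sub>R (A,B)) = h *\<^sub>R dE (p,v) (A,B)" by (rule linear_cmul[OF linE])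
    moreover have "dX p l (h *\<^sub>R dE (p,v) (A,B)) = h *\<^sub>R W" unfolding W_def by (rule linear_cmul[OF linX])
    ultimately show "dX p l (dE (p,v) (h *\<^sub>R (A,B))) = h *\<^sub>R W" by simp
  qed
  ultimately have Kd: "(K has_vector_derivative W) (at 0)" by (simp add: has_vector_derivative_def)
  define de where "de = mink A A - mink B B"
  define fs where "fs = (\<lambda>s::real. 2 * inverse (-2 + s^2 * de))"
  define y where "y = (\<lambda>s. p + fs s *\<^sub>R (p + s *\<^sub>R A))"
  have fd: "(fs has_real_derivative 0) (at 0)"
    unfolding fs_def by (auto intro!: derivative_eq_intros)
  have g2: "((\<lambda>s. p + s *\<^sub>R A) has_vector_derivative A) (at 0)"
    using has_vector_derivative_add[OF has_vector_derivative_const[of p] has_vector_derivative_scaleR[OF DERIV_ident has_vector_derivative_const[of A]]]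
    by simp
  have "(y has_vector_derivative (0 + (fs 0 *\<^sub>R A + 0 *\<^sub>R (p + 0 *\<^sub>R A)))) (at 0)"
    unfolding y_def by (intro has_vector_derivative_add has_vector_derivative_const has_vector_derivative_scaleR fd g2)
  hence yd: "(y has_vector_derivative - A) (at 0)" by (simp add: fs_def)
  define Z where "Z = {s::real. p$0 + s * A$0 + (v$0 + s * B$0) \<noteq> 0} \<inter> {s. p$0 + s * A$0 - (v$0 + s * B$0) \<noteq> 0}"
  have Zo: "open Z" unfolding Z_def
    by (intro open_Int open_Collect_neq continuous_intros)
  have Z0: "0 \<in> Z" using ut_time[OF u] by (auto simp: Z_def)
  have yK: "y s = K s" if s: "s \<in> Z" for s
  proof -
    have c1: "(p + s *\<^sub>R A)$0 + (v + s *\<^sub>R B)$0 \<noteq> 0" "(p + s *\<^sub>R A)$0 - (v + s *\<^sub>R B)$0 \<noteq> 0"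
      using s by (auto simp: Z_def)
    have "K s = p - inverse (mink (p + s *\<^sub>R A) (p + s *\<^sub>R A) - mink (v + s *\<^sub>R B) (v + s *\<^sub>R B)) *\<^sub>R
             ((2 * mink p (p + s *\<^sub>R A)) *\<^sub>R (p + s *\<^sub>R A) - (2 * mink p (v + s *\<^sub>R B)) *\<^sub>R (v + s *\<^sub>R B))"
      unfolding K_def g_def by (rule X_E_gen[OF c1])
    also have "mink (p + s *\<^sub>R A) (p + s *\<^sub>R A) - mink (v + s *\<^sub>R B) (v + s *\<^sub>R B) = -2 + s^2 * de"
      using f nA nB unfolding normal_vec_def de_def
      by (simp add: mink_simps mink_sym[of p A] mink_sym[of v B] power2_eq_square algebra_simps)
    also have "mink p (p + s *\<^sub>R A) = -1" using f nA unfolding normal_vec_def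
      by (simp add: mink_simps mink_sym[of p A])
    also have "mink p (v + s *\<^sub>R B) = 0" using f nB unfolding normal_vec_def
      by (simp add: mink_simps mink_sym[of p B])
    finally show ?thesis by (simp add: y_def fs_def)
  qed
  have "(K has_vector_derivative - A) (at 0)"
    by (rule has_vector_derivative_transform_within_open[OF yd Zo Z0 yK])
  hence "W = - A" using Kd vector_derivative_unique_at by blast
  thus ?thesis by (simp add: W_def l_def)
qed




lemma crit_strict:
  assumes S: "surface2 M" and hML: "M \<subseteq> Lspace" and as: "almost_semidefinite M"
    and o: "oq \<in> hyp" and cr: "critical_on M (Dfun oq) l"
  shows "Dfun oq l = 0 \<and> (\<exists>U. open U \<and> l \<in> U \<and> (\<forall>l'\<in>M \<inter> U. l' \<noteq> l \<longrightarrow> Dfun oq l < Dfun oq l'))"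
proof -
  have D0: "Dfun oq l = 0" by (rule critical_D0[OF S hML as o cr])
  have lM: "l \<in> M" using cr by (simp add: critical_on_def)
  have lL: "l \<in> Lspace" using lM hML by auto
  have lc: "l \<in> Lchar" using lL Lspace_eq by simp
  obtain p v where u: "unit_tangent p v" and e: "endpoints (p,v) = l" and b0: "mink oq v = 0"
    using foot_rep[OF lL o] by blast
  note f = ut_facts[OF u]
  define a where "a = - mink oq p"
  define N where "N = oq + mink oq p *\<^sub>R p - mink oq v *\<^sub>R v"
  note d = decomp[OF u o, folded N_def]
  have a0: "a > 0" using d(4) by (simp add: a_def)
  have aa: "a^2 = 1 + mink N N" using d(2) b0 by (simp add: a_def)
  have Fl: "Ff oq l = a^2" using F_E[OF u, of oq] e b0 by (simp add: a_def)
  have a1: "1 \<le> a" using power2_le_imp_le[of 1 a] aa d(3) a0 by simp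
  have "arcosh a ^ 2 = 0" using D_formula(1)[OF o lL] Fl a0 D0 by (simp add: Gf_def)
  hence "a = 1" using a1 by simp
  hence "mink N N = 0" using aa by simp
  hence "N = 0" using spacelike(2)[of p N] f d(1) by (simp add: normal_vec_def)
  moreover have mp: "mink oq p = -1" using \<open>a = 1\<close> by (simp add: a_def)
  ultimately have "oq - p = 0" using b0 by (simp add: N_def)
  hence po: "p = oq" by simp
  have F1: "Ff oq l = 1" using Fl \<open>a = 1\<close> by simp
  have X0: "Xf oq l = 0"
  proof -
    note xp = X_props[OF o lc]
    have "mink (Xf oq l) (Xf oq l) = 0" using xp(1) F1 by simp
    thus ?thesis using spacelike(2)[OF xp(3) xp(2)] by simp
  qed
  obtain U and V :: "(real^2) set" and \<phi> \<psi> y0 \<phi>' where U: "open U" "l \<in> U" "open V"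
    "homeomorphism V (M \<inter> U) \<phi> \<psi>" "y0 \<in> V" "\<phi> y0 = l"
    and ch: "(\<phi> has_derivative \<phi>') (at y0)" "inj \<phi>'" "linear \<phi>'"
    and tg: "\<And>e. \<phi>' e \<in> tangent_space M l"
    by (rule chart_at[OF S lM]) blast
  have Xd: "(Xf oq has_derivative dX oq l) (at l)" using X_hasderiv Lchar_mink[OF lc] by simp
  have linX: "linear (dX oq l)" using Xd has_derivative_bounded_linear bounded_linear.linear by blast
  have linE: "linear (dE (p,v))" by (rule ut_dE_linear[OF u])
  define fX where "fX = (\<lambda>y. Xf oq (\<phi> y))"
  have fd: "(fX has_derivative (\<lambda>h. dX oq l (\<phi>' h))) (at y0)"
    unfolding fX_def using has_derivative_compose[OF ch(1), of "Xf oq" "dX oq l"] Xd U(6) by simp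
  have ker: "h = 0" if h: "dX oq l (\<phi>' h) = 0" for h
  proof -
    obtain A B where AB: "normal_vec p v A" "normal_vec p v B" "\<phi>' h = dE (p,v) (A,B)"
      using tangent_in_range[OF hML u tg[of h, folded e]] by blast
    have "dX oq l (dE (p,v) (A,B)) = - A" using dXE[OF u AB(1,2)] po e by simp
    hence A0: "A = 0" using h AB(3) by simp
    have "dE (p,v) (0,B) \<in> tangent_space M (endpoints (p,v))" using tg[of h] AB(3) A0 e by simp
    hence "B = 0" using SD[OF as u _ AB(2)] lM e by simp
    hence "\<phi>' h = 0" using AB(3) A0 linear_0[OF linE] by (simp add: zero_prod_def)
    hence "\<phi>' h = \<phi>' 0" using linear_0[OF ch(3)] by simp
    thus "h = 0" by (rule injD[OF ch(2)])
  qed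
  have "inj (\<lambda>h. dX oq l (\<phi>' h))"
  proof (rule injI)
    fix h1 h2 assume "dX oq l (\<phi>' h1) = dX oq l (\<phi>' h2)"
    hence "dX oq l (\<phi>' (h1 - h2)) = 0"
      by (simp add: linear_diff[OF ch(3)] linear_diff[OF linX])
    thus "h1 = h2" using ker[of "h1 - h2"] by simp
  qed
  from local_inj[OF fd this] obtain r where
    r: "r > 0" "\<forall>y. dist y y0 < r \<and> y \<noteq> y0 \<longrightarrow> fX y \<noteq> fX y0" by blast
  have hom: "\<forall>x\<in>V. \<psi> (\<phi> x) = x" "\<phi> ` V = M \<inter> U" "\<forall>y\<in>M \<inter> U. \<phi> (\<psi> y) = y"
    "\<psi> ` (M \<inter> U) = V" "continuous_on (M \<inter> U) \<psi>"
    using U(4) by (simp_all add: homeomorphism_def)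
  from hom(5)[unfolded continuous_on_open_invariant, rule_format, OF open_ball[of y0 r]]
  obtain T where T: "open T" "T \<inter> (M \<inter> U) = \<psi> -` ball y0 r \<inter> (M \<inter> U)" by blast
  have "\<psi> (\<phi> y0) = y0" using hom(1) U(5) by blast
  hence psil: "\<psi> l = y0" using U(6) by simp
  have lT: "l \<in> T" using T(2) psil r(1) lM U(2) by auto
  have "\<forall>l'\<in>M \<inter> (T \<inter> U). l' \<noteq> l \<longrightarrow> Dfun oq l < Dfun oq l'"
  proof (intro ballI impI)
    fix l' assume l': "l' \<in> M \<inter> (T \<inter> U)" and ne: "l' \<noteq> l"
    have l'MU: "l' \<in> M \<inter> U" using l' by auto
    define y where "y = \<psi> l'"
    have yb: "y \<in> ball y0 r" using T(2) l' by (auto simp: y_def)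
    have yV: "y \<in> V" using hom(4) l'MU by (auto simp: y_def)
    have py: "\<phi> y = l'" using hom(3) l'MU by (simp add: y_def)
    have "y \<noteq> y0" using py ne U(6) by auto
    moreover have "dist y y0 < r" using yb by (simp add: dist_commute)
    ultimately have "fX y \<noteq> fX y0" using r(2) by simp
    hence "Xf oq l' \<noteq> 0" using X0 py U(6) by (simp add: fX_def)
    moreover have "l' \<in> Lspace" using l' hML by auto
    ultimately have "Dfun oq l' > 0" using X_nonzero_D[OF o, of l'] by simp
    thus "Dfun oq l < Dfun oq l'" using D0 by simp
  qed
  moreover have "open (T \<inter> U)" by (rule open_Int[OF T(1) U(1)])
  moreover have "l \<in> T \<inter> U" using lT U(2) by simp
  ultimately show ?thesis
    apply -
    apply (rule conjI[OF D0])
    apply (rule exI[of _ "T \<inter> U"])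
    by simp
qed




lemmas mink_cont[continuous_intros] = bounded_bilinear.continuous_on[OF bb_mink]

lemma null_comp_bound:
  assumes "mink x x = 0" "x$0 = 1"
  shows "norm x \<le> 4"
proof -
  have s: "x$1^2 + x$2^2 + x$3^2 = 1" using assms by (simp add: mink_exp power2_eq_square)
  have "x$1^2 \<le> 1" "x$2^2 \<le> 1" "x$3^2 \<le> 1"
    using s zero_le_power2[of "x$1"] zero_le_power2[of "x$2"] zero_le_power2[of "x$3"] by linarith+
  hence "\<bar>x$1\<bar> \<le> 1" "\<bar>x$2\<bar> \<le> 1" "\<bar>x$3\<bar> \<le> 1" by (simp_all add: abs_square_le_1)
  moreover have "norm x \<le> \<bar>x$0\<bar> + \<bar>x$1\<bar> + \<bar>x$2\<bar> + \<bar>x$3\<bar>"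
    using norm_le_l1_cart[of x] unfolding sum_4 by (simp add: z4[symmetric] add_ac)
  ultimately show ?thesis using assms(2) by simp
qed

lemma aux_div:
  fixes P m C :: real
  assumes "m < 0" "-(P/m) < C"
  shows "P \<le> -(C*m)"
proof -
  have "-(P/m) * (-m) < C * (-m)" using assms by (intro mult_strict_right_mono) auto
  moreover have "-(P/m) * (-m) = P" using assms(1) by simp
  ultimately show ?thesis by simp
qed

lemma partC:
  assumes o: "oq \<in> hyp" and hML: "M \<subseteq> Lspace" and cl: "closedin (top_of_set Lspace) M"
    and sM: "\<forall>n. s n \<in> M"
    and nc: "\<forall>x\<in>M. \<exists>U. open U \<and> x \<in> U \<and> finite {n. s n \<in> U}"
  shows "filterlim (\<lambda>n. Dfun oq (s n)) at_top sequentially"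
  unfolding filterlim_at_top
proof (rule allI, rule ccontr)
  fix Z :: real
  assume ne: "\<not> eventually (\<lambda>n. Z \<le> Dfun oq (s n)) sequentially"
  define I where "I = {n. \<not> Z \<le> Dfun oq (s n)}"
  have inf: "infinite I" using ne unfolding I_def cofinite_eq_sequentially[symmetric] eventually_cofinite by simp
  define C where "C = cosh (sqrt \<bar>Z\<bar>) ^ 2"
  have C0: "C > 0" by (simp add: C_def)
  define K where "K = {z::(real^4)\<times>(real^4). mink (fst z) (fst z) = 0 \<and> mink (snd z) (snd z) = 0 \<and>
      fst z $ 0 = 1 \<and> snd z $ 0 = 1 \<and> 2 * mink oq (fst z) * mink oq (snd z) \<le> - C * mink (fst z) (snd z)}"
  have sK: "s n \<in> K" if n: "n \<in> I" for n
  proof -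
    have sL: "s n \<in> Lspace" using sM hML by auto
    hence sc: "s n \<in> Lchar" using Lspace_eq by simp
    have DZ: "Dfun oq (s n) < Z" using n by (simp add: I_def)
    have F1: "Ff oq (s n) \<ge> 1" using D_formula(2)[OF o sL] .
    have "Dfun oq (s n) = arcosh (sqrt (Ff oq (s n))) ^ 2" using D_formula(1)[OF o sL] by (simp add: Gf_def)
    hence "arcosh (sqrt (Ff oq (s n))) ^ 2 < \<bar>Z\<bar>" using DZ by simp
    hence ac: "arcosh (sqrt (Ff oq (s n))) < sqrt \<bar>Z\<bar>" by (rule real_less_rsqrt)
    have sq: "sqrt (Ff oq (s n)) < cosh (sqrt \<bar>Z\<bar>)"
    proof (rule ccontr)
      assume "\<not> ?thesis"
      hence "cosh (sqrt \<bar>Z\<bar>) \<le> sqrt (Ff oq (s n))" by simp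
      from arcosh_mono_le[OF cosh_real_ge_1 this] have "sqrt \<bar>Z\<bar> \<le> arcosh (sqrt (Ff oq (s n)))"
        by (simp add: arcosh_cosh_real)
      thus False using ac by simp
    qed
    have "Ff oq (s n) < C"
    proof -
      have "sqrt (Ff oq (s n)) ^ 2 < cosh (sqrt \<bar>Z\<bar>) ^ 2"
        using sq F1 by (intro power_strict_mono) auto
      thus ?thesis using F1 by (simp add: C_def)
    qed
    moreover have m: "mink (fst (s n)) (snd (s n)) < 0" using Lchar_mink[OF sc] .
    ultimately have "2 * mink oq (fst (s n)) * mink oq (snd (s n)) \<le> - C * mink (fst (s n)) (snd (s n))"
      unfolding Ff_def using aux_div[of "mink (fst (s n)) (snd (s n))" "2 * (mink oq (fst (s n)) * mink oq (snd (s n)))" C]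
      by simp
    thus ?thesis using sc unfolding K_def Lchar_def by (cases "s n") auto
  qed
  have KL: "K \<subseteq> Lspace"
  proof
    fix z assume z: "z \<in> K"
    have n1: "mink oq (fst z) < 0" "mink oq (snd z) < 0"
      using z mink_neg[OF o, of "fst z"] mink_neg[OF o, of "snd z"] by (auto simp: K_def)
    hence "2 * mink oq (fst z) * mink oq (snd z) > 0" by (simp add: mult_neg_neg)
    hence "- C * mink (fst z) (snd z) > 0" using z by (auto simp: K_def)
    hence "mink (fst z) (snd z) < 0" using C0 by (simp add: mult_less_0_iff)
    thus "z \<in> Lspace" using z unfolding Lspace_eq K_def Lchar_def by (cases z) auto
  qed
  have Kc: "compact K"
  proof (rule compact_eq_bounded_closed[THEN iffD2], rule conjI)
    show "bounded K" unfolding bounded_iff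
    proof (intro exI ballI)
      fix z assume z: "z \<in> K"
      have "norm (fst z) \<le> 4" "norm (snd z) \<le> 4" using z null_comp_bound by (auto simp: K_def)
      thus "norm z \<le> 8" using norm_Pair_le[of "fst z" "snd z"] by simp
    qed
    show "closed K" unfolding K_def
      by (intro closed_Collect_conj closed_Collect_eq closed_Collect_le continuous_intros)
  qed
  obtain Cl where Cl: "closed Cl" "M = Lspace \<inter> Cl" using cl closedin_closed by blast
  have MK: "M \<inter> K = Cl \<inter> K" using Cl(2) KL by auto
  have MKc: "compact (M \<inter> K)" unfolding MK using Cl(1) Kc by (rule closed_Int_compact)
  define r where "r = enumerate I"
  have rI: "r n \<in> I" for n using enumerate_in_set[OF inf] by (simp add: r_def)
  have rm: "strict_mono r" using strict_mono_enumerate[OF inf] by (simp add: r_def)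
  have "\<forall>n. s (r n) \<in> M \<inter> K" using sM sK rI by auto
  from seq_compactE[OF compact_imp_seq_compact[OF MKc] this]
  obtain x \<sigma> where x: "x \<in> M \<inter> K" "strict_mono \<sigma>" "((\<lambda>n. s (r n)) \<circ> \<sigma>) \<longlonglongrightarrow> x" by blast
  obtain U where U: "open U" "x \<in> U" "finite {n. s n \<in> U}" using nc x(1) by blast
  have "eventually (\<lambda>n. ((\<lambda>n. s (r n)) \<circ> \<sigma>) n \<in> U) sequentially"
    using topological_tendstoD[OF x(3) U(1,2)] .
  then obtain N where N: "\<And>n. n \<ge> N \<Longrightarrow> s (r (\<sigma> n)) \<in> U" unfolding eventually_sequentially by auto
  have "(r \<circ> \<sigma>) ` {N..} \<subseteq> {n. s n \<in> U}" using N by auto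
  hence fin: "finite ((r \<circ> \<sigma>) ` {N..})" using U(3) finite_subset by blast
  have "inj (r \<circ> \<sigma>)" using strict_mono_imp_inj_on strict_mono_o[OF rm x(2)] by blast
  hence "finite {N..}" using fin finite_imageD inj_on_subset by blast
  thus False using infinite_Ici[of N] by simp
qed


theorem lemma3p3:
  fixes ob :: "real^4" and M :: "((real^4) \<times> (real^4)) set"
  assumes "ob \<in> hyp"
    and "M \<subseteq> Lspace" and "surface2 M"
    and "closedin (top_of_set Lspace) M" and "connected M"
    and "almost_semidefinite M"
  shows "(\<forall>p v. unit_tangent p v \<and> endpoints (p, v) \<in> M \<longrightarrow>
            (\<forall>w. normal_vec p v w \<longrightarrow>
               (\<exists>B. normal_vec p v B \<and>
                    Tgeo p v w B \<in> tangent_space M (endpoints (p, v)))))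
       \<and> (\<forall>l. critical_on M (Dfun ob) l \<longrightarrow>
            Dfun ob l = 0 \<and>
            (\<exists>U. open U \<and> l \<in> U \<and> (\<forall>l'\<in>M \<inter> U. l' \<noteq> l \<longrightarrow> Dfun ob l < Dfun ob l')))
       \<and> (\<forall>s :: nat \<Rightarrow> (real^4) \<times> (real^4). (\<forall>n. s n \<in> M) \<and>
            (\<forall>x\<in>M. \<exists>U. open U \<and> x \<in> U \<and> finite {n. s n \<in> U})
            \<longrightarrow> filterlim (\<lambda>n. Dfun ob (s n)) at_top sequentially)"
proof (intro conjI allI impI)
  fix p v w
  assume a: "unit_tangent p v \<and> endpoints (p, v) \<in> M" and w: "normal_vec p v w"
  show "\<exists>B. normal_vec p v B \<and> Tgeo p v w B \<in> tangent_space M (endpoints (p, v))"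
    using partA[OF assms(3) assms(2) assms(6) _ _ w] a by blast
next
  fix l assume "critical_on M (Dfun ob) l"
  from crit_strict[OF assms(3) assms(2) assms(6) assms(1) this]
  show "Dfun ob l = 0" "\<exists>U. open U \<and> l \<in> U \<and> (\<forall>l'\<in>M \<inter> U. l' \<noteq> l \<longrightarrow> Dfun ob l < Dfun ob l')"
    by blast+
next
  fix s :: "nat \<Rightarrow> (real^4) \<times> (real^4)"
  assume "(\<forall>n. s n \<in> M) \<and> (\<forall>x\<in>M. \<exists>U. open U \<and> x \<in> U \<and> finite {n. s n \<in> U})"
  thus "filterlim (\<lambda>n. Dfun ob (s n)) at_top sequentially"
    using partC[OF assms(1) assms(2) assms(4)] by blast
qed

end
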